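(* Let $X=[0,1[$, let $\widehat{\operatorname{PC}^{\bowtie}}$ be the group of all bijections $X\to X$ that are continuous outside a finite subset of $X$, and let $\operatorname{PC}^{\bowtie}=\widehat{\operatorname{PC}^{\bowtie}}/{\mathfrak S}_{\mathrm{fin}}$. Let $G$ be any subgroup of $\operatorname{PC}^{\bowtie}$. Then the Kapoudjian class of $G$ is zero; that is, the central extension $0\to \mathbb{Z}/2\mathbb{Z}={\mathfrak S}_{\mathrm{fin}}/{\mathfrak A}_{\mathrm{fin}}\to \widehat{G}/{\mathfrak A}_{\mathrm{fin}}\to G\to 1$ splits.
   Context: ${\mathfrak S}_{\mathrm{fin}}$ denotes the group of finitely supported permutations of $X$ (a normal subgroup of $\widehat{\operatorname{PC}^{\bowtie}}$ and of the group ${\mathfrak S}(X)$ of all bijections of $X$), and ${\mathfrak A}_{\mathrm{fin}}$ its subgroup of even permutations (kernel of the classical signature), which is normal in ${\mathfrak S}(X)$. For a subgroup $G$ of ${\mathfrak S}(X)/{\mathfrak S}_{\mathrm{fin}}$, $\widehat{G}$ denotes its inverse image in ${\mathfrak S}(X)$. The Kapoudjian class of $G$ is the class in $H^2(G,\mathbb{Z}/2\mathbb{Z})$ of the central extension $0\to {\mathfrak S}_{\mathrm{fin}}/{\mathfrak A}_{\mathrm{fin}}\cong\mathbb{Z}/2\mathbb{Z}\to \widehat{G}/{\mathfrak A}_{\mathrm{fin}}\to G\to 1$. *)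

theory Defs
  imports "HOL-Analysis.Analysis" "HOL-Algebra.Bij" "HOL-Algebra.Coset"
    "HOL-Combinatorics.Permutations"
begin

definition XX :: "real set" where
  "XX = {0..<1}"

abbreviation SX :: "(real \<Rightarrow> real) monoid" where
  "SX \<equiv> BijGroup XX"

definition PC_hat_carrier :: "(real \<Rightarrow> real) set" where
  "PC_hat_carrier = {f \<in> Bij XX. \<exists>F. finite F \<and> F \<subseteq> XX \<and>
        (\<forall>x \<in> XX - F. continuous (at x within XX) f)}"

definition PC_hat :: "(real \<Rightarrow> real) monoid" where
  "PC_hat = SX\<lparr>carrier := PC_hat_carrier\<rparr>"

definition Sfin :: "(real \<Rightarrow> real) set" where
  "Sfin = {f \<in> Bij XX. finite {x \<in> XX. f x \<noteq> x}}"

definition Afin :: "(real \<Rightarrow> real) set" where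
  "Afin = {f \<in> Sfin. evenperm (restrict_id f XX)}"

definition PC :: "(real \<Rightarrow> real) set monoid" where
  "PC = PC_hat Mod Sfin"

text \<open>Inverse image in PC_hat of a subgroup G of PC.\<close>
definition G_hat :: "(real \<Rightarrow> real) set set \<Rightarrow> (real \<Rightarrow> real) set" where
  "G_hat G = \<Union> G"

text \<open>The central extension  0 \<rightarrow> Sfin/Afin \<rightarrow> G_hat/Afin \<rightarrow> G \<rightarrow> 1 :
  its middle group and its projection (an Afin-coset A is sent to the
  Sfin-coset containing it, namely A <#> Sfin).\<close>
definition kap_ext :: "(real \<Rightarrow> real) set set \<Rightarrow> (real \<Rightarrow> real) set monoid" where
  "kap_ext G = (SX\<lparr>carrier := G_hat G\<rparr>) Mod Afin"

definition kap_proj :: "(real \<Rightarrow> real) set \<Rightarrow> (real \<Rightarrow> real) set" where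
  "kap_proj A = A <#>\<^bsub>SX\<^esub> Sfin"

definition kapoudjian_class_zero :: "(real \<Rightarrow> real) set set \<Rightarrow> bool" where
  "kapoudjian_class_zero G \<longleftrightarrow>
     (\<exists>s. s \<in> hom (PC\<lparr>carrier := G\<rparr>) (kap_ext G) \<and> (\<forall>g \<in> G. kap_proj (s g) = g))"

end

theory Submission
  imports Defs
begin

definition dis :: "(real \<Rightarrow> real) \<Rightarrow> real \<Rightarrow> real \<Rightarrow> bool" where
  "dis f x y \<longleftrightarrow> (x < y \<and> f y < f x) \<or> (y < x \<and> f x < f y)"

definition invs :: "(real \<Rightarrow> real) \<Rightarrow> real set \<Rightarrow> nat" where
  "invs f Q = card {(x,y). x \<in> Q \<and> y \<in> Q \<and> x < y \<and> f y < f x}"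

lemma dis_sym: "dis f x y = dis f y x"
  unfolding dis_def by auto

lemma dis_irrefl[simp]: "\<not> dis f x x"
  unfolding dis_def by auto

lemma invs_insert:
  assumes "finite Q" "c \<notin> Q"
  shows "invs f (insert c Q) = invs f Q + card {r \<in> Q. dis f r c}"
proof -
  let ?S = "{(x,y). x \<in> Q \<and> y \<in> Q \<and> x < y \<and> f y < f x}"
  let ?A = "(\<lambda>r. (r,c)) ` {r \<in> Q. r < c \<and> f c < f r}"
  let ?B = "(\<lambda>r. (c,r)) ` {r \<in> Q. c < r \<and> f r < f c}"
  have eq: "{(x,y). x \<in> insert c Q \<and> y \<in> insert c Q \<and> x < y \<and> f y < f x} = ?S \<union> ?A \<union> ?B"
    by auto
  have fS: "finite ?S"
    by (rule finite_subset[of _ "Q \<times> Q"]) (use assms in auto)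
  have d1: "?S \<inter> ?A = {}" "?S \<inter> ?B = {}" "?A \<inter> ?B = {}" using assms by auto
  have cA: "card ?A = card {r \<in> Q. r < c \<and> f c < f r}"
    by (rule card_image) (auto simp: inj_on_def)
  have cB: "card ?B = card {r \<in> Q. c < r \<and> f r < f c}"
    by (rule card_image) (auto simp: inj_on_def)
  have "card {r \<in> Q. dis f r c} = card ({r \<in> Q. r < c \<and> f c < f r} \<union> {r \<in> Q. c < r \<and> f r < f c})"
    by (rule arg_cong[where f=card]) (auto simp: dis_def)
  also have "\<dots> = card {r \<in> Q. r < c \<and> f c < f r} + card {r \<in> Q. c < r \<and> f r < f c}"
    by (rule card_Un_disjoint) (use assms in auto)
  finally have cD: "card {r \<in> Q. dis f r c} = card {r \<in> Q. r < c \<and> f c < f r} + card {r \<in> Q. c < r \<and> f r < f c}" .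
  have "card (?S \<union> ?A \<union> ?B) = card ?S + card ?A + card ?B"
    using fS assms d1 by (simp add: card_Un_disjoint Int_Un_distrib2)
  then show ?thesis unfolding invs_def eq cD cA cB by simp
qed

lemma invs_dis2:
  assumes "finite Q"
  shows "card {(x,y). x \<in> Q \<and> y \<in> Q \<and> dis f x y} = 2 * invs f Q"
proof -
  let ?S = "{(x,y). x \<in> Q \<and> y \<in> Q \<and> x < y \<and> f y < f x}"
  let ?T = "{(x,y). x \<in> Q \<and> y \<in> Q \<and> y < x \<and> f x < f y}"
  have eq: "{(x,y). x \<in> Q \<and> y \<in> Q \<and> dis f x y} = ?S \<union> ?T"
    by (auto simp: dis_def)
  have fS: "finite ?S" "finite ?T"
    by (rule finite_subset[of _ "Q \<times> Q"], use assms in auto)+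
  have "?T = (\<lambda>(x,y). (y,x)) ` ?S" by auto
  moreover have "inj_on (\<lambda>(x,y). (y,x)) ?S" by (auto simp: inj_on_def)
  ultimately have "card ?T = card ?S" by (simp add: card_image)
  moreover have "card (?S \<union> ?T) = card ?S + card ?T"
    by (rule card_Un_disjoint) (use fS in auto)
  ultimately show ?thesis unfolding eq invs_def by simp
qed


lemma card_xor_parity:
  assumes "finite A" "finite B"
  shows "even (card ((A - B) \<union> (B - A))) = (even (card A) = even (card B))"
proof -
  have "card (A \<union> B) + card (A \<inter> B) = card A + card B"
    using card_Un_Int[OF assms] by simp
  moreover have "card ((A - B) \<union> (B - A)) + card (A \<inter> B) = card (A \<union> B)"
  proof -
    have "(A \<union> B) = ((A - B) \<union> (B - A)) \<union> (A \<inter> B)" by auto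
    moreover have "card (((A - B) \<union> (B - A)) \<union> (A \<inter> B)) = card ((A - B) \<union> (B - A)) + card (A \<inter> B)"
      by (rule card_Un_disjoint) (use assms in auto)
    ultimately show ?thesis by simp
  qed
  ultimately show ?thesis by presburger
qed

lemma invs_comp:
  fixes g h f :: "real \<Rightarrow> real"
  assumes fin: "finite Q" and ig: "inj_on g Q" and ih: "inj_on h Q"
    and hfg: "\<And>x. x \<in> Q \<Longrightarrow> h x = f (g x)"
  shows "even (invs h Q) = (even (invs g Q) = even (invs f (g ` Q)))"
proof -
  let ?T = "{(x,y). x \<in> Q \<and> y \<in> Q \<and> x < y}"
  let ?A = "{(x,y). x \<in> Q \<and> y \<in> Q \<and> x < y \<and> g y < g x}"
  let ?B = "{(x,y). x \<in> Q \<and> y \<in> Q \<and> x < y \<and> h y < h x}"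
  let ?C = "{(u,v). u \<in> g ` Q \<and> v \<in> g ` Q \<and> u < v \<and> f v < f u}"
  let ?X = "(?A - ?B) \<union> (?B - ?A)"
  let ?psi = "\<lambda>(x,y). (min (g x) (g y), max (g x) (g y))"
  have fA: "finite ?A" "finite ?B"
    by (rule finite_subset[of _ "Q \<times> Q"], use fin in auto)+
  have "inj_on ?psi ?X"
  proof (rule inj_onI)
    fix p q assume p: "p \<in> ?X" and q: "q \<in> ?X" and e: "?psi p = ?psi q"
    obtain x y where pxy: "p = (x,y)" by (cases p)
    obtain x' y' where qxy: "q = (x',y')" by (cases q)
    have xy: "x \<in> Q" "y \<in> Q" "x < y" "x' \<in> Q" "y' \<in> Q" "x' < y'" using p q pxy qxy by auto
    have gne: "g x \<noteq> g y" "g x' \<noteq> g y'" using xy ig by (auto simp: inj_on_def)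
    from e pxy qxy have e2: "min (g x) (g y) = min (g x') (g y')" "max (g x) (g y) = max (g x') (g y')" by auto
    have "(g x = g x' \<and> g y = g y') \<or> (g x = g y' \<and> g y = g x')"
      using e2 gne by (auto simp: min_def max_def split: if_splits)
    then have "(x = x' \<and> y = y') \<or> (x = y' \<and> y = x')"
      using ig xy by (auto simp: inj_on_def)
    then show "p = q" using xy pxy qxy by auto
  qed
  moreover have "?psi ` ?X = ?C"
  proof
    show "?psi ` ?X \<subseteq> ?C"
    proof
      fix z assume "z \<in> ?psi ` ?X"
      then obtain x y where z: "z = ?psi (x,y)" and xy: "(x,y) \<in> ?X" by auto
      have q: "x \<in> Q" "y \<in> Q" "x < y" using xy by auto
      have gne: "g x \<noteq> g y" using q ig by (auto simp: inj_on_def)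
      have hne: "h x \<noteq> h y" using q ih by (auto simp: inj_on_def)
      have hx: "h x = f (g x)" "h y = f (g y)" using hfg q by auto
      show "z \<in> ?C"
        using xy q gne hne hx z by (auto simp: min_def max_def)
    qed
  next
    show "?C \<subseteq> ?psi ` ?X"
    proof
      fix z assume z: "z \<in> ?C"
      then obtain x y where z': "z = (g x, g y)" "x \<in> Q" "y \<in> Q" "g x < g y" "f (g y) < f (g x)"
        by auto
      have hx: "h x = f (g x)" "h y = f (g y)" using hfg z' by auto
      have "x \<noteq> y" using z' by auto
      then consider "x < y" | "y < x" by linarith
      then show "z \<in> ?psi ` ?X"
      proof cases
        case 1
        then have "(x,y) \<in> ?X" using z' hx by auto
        moreover have "z = ?psi (x,y)" using z' by auto
        ultimately show ?thesis by blast
      next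
        case 2
        then have "(y,x) \<in> ?X" using z' hx by auto
        moreover have "z = ?psi (y,x)" using z' by auto
        ultimately show ?thesis by blast
      qed
    qed
  qed
  ultimately have "card ?C = card ?X" using card_image by fastforce
  then have "even (card ?C) = (even (card ?A) = even (card ?B))"
    using card_xor_parity[OF fA] by simp
  then show ?thesis
    unfolding invs_def by blast
qed

definition sameP :: "real set \<Rightarrow> real \<Rightarrow> real \<Rightarrow> bool" where
  "sameP P x y \<longleftrightarrow> x \<in> XX \<and> y \<in> XX \<and> (\<forall>p\<in>P. \<not> (min x y \<le> p \<and> p \<le> max x y))"

definition adm :: "(real \<Rightarrow> real) \<Rightarrow> real set \<Rightarrow> bool" where
  "adm f P \<longleftrightarrow> finite P \<and> P \<subseteq> XX \<and> 0 \<in> P \<and> (\<forall>x\<in>XX - P. continuous (at x within XX) f)"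

definition good3 :: "real set \<Rightarrow> real set \<Rightarrow> bool" where
  "good3 P M \<longleftrightarrow> finite M \<and> M \<subseteq> XX - P \<and> (\<forall>x\<in>XX - P. card {m \<in> M. sameP P x m} = 3)"

lemma XX_iff: "x \<in> XX \<longleftrightarrow> 0 \<le> x \<and> x < 1"
  by (simp add: XX_def)

lemma sameP_sym: "sameP P x y = sameP P y x"
  unfolding sameP_def by (auto simp: min_def max_def)

lemma sameP_notin: "sameP P x y \<Longrightarrow> x \<notin> P \<and> y \<notin> P \<and> x \<in> XX \<and> y \<in> XX"
  unfolding sameP_def by (metis max.cobounded1 max.cobounded2 min.cobounded1 min.cobounded2)

lemma sameP_refl: "x \<in> XX \<Longrightarrow> x \<notin> P \<Longrightarrow> sameP P x x"
  unfolding sameP_def by auto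

lemma sameP_trans: "sameP P x y \<Longrightarrow> sameP P y z \<Longrightarrow> sameP P x z"
proof -
  assume h: "sameP P x y" "sameP P y z"
  have "\<not> (min x z \<le> p \<and> p \<le> max x z)" if p: "p \<in> P" for p
  proof -
    have a: "\<not> (min x y \<le> p \<and> p \<le> max x y)" "\<not> (min y z \<le> p \<and> p \<le> max y z)"
      using h p unfolding sameP_def by auto
    then show ?thesis by (auto simp: min_def max_def split: if_splits)
  qed
  then show ?thesis using h unfolding sameP_def by auto
qed

lemma sameP_conv:
  assumes "sameP P x y" "min x y \<le> z" "z \<le> max x y"
  shows "sameP P x z"
  using assms unfolding sameP_def XX_iff by (auto simp: min_def max_def split: if_splits)

lemma sameP_mono: "sameP P' x y \<Longrightarrow> P \<subseteq> P' \<Longrightarrow> sameP P x y"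
  unfolding sameP_def by auto

lemma sameP_cont_on:
  assumes "adm f P" "sameP P a b"
  shows "continuous_on {min a b..max a b} f"
proof -
  have sub: "{min a b..max a b} \<subseteq> XX - P"
  proof
    fix t assume t: "t \<in> {min a b..max a b}"
    then have "sameP P a t" using sameP_conv[OF assms(2)] by auto
    then show "t \<in> XX - P" using sameP_notin by blast
  qed
  show ?thesis
    unfolding continuous_on_eq_continuous_within
  proof
    fix t assume "t \<in> {min a b..max a b}"
    then have "continuous (at t within XX) f" using sub assms(1) unfolding adm_def by auto
    moreover have "{min a b..max a b} \<subseteq> XX" using sub by auto
    ultimately show "continuous (at t within {min a b..max a b}) f"
      using continuous_within_subset by blast
  qed
qed

lemma sameP_ivt:
  assumes "adm f P" "sameP P a b" "min (f a) (f b) \<le> z" "z \<le> max (f a) (f b)"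
  shows "\<exists>t. min a b \<le> t \<and> t \<le> max a b \<and> f t = z"
proof -
  have "connected (f ` {min a b..max a b})"
    by (rule connected_continuous_image[OF sameP_cont_on[OF assms(1,2)]]) simp
  then have iv: "is_interval (f ` {min a b..max a b})"
    using is_interval_connected_1 by blast
  have ab: "f a \<in> f ` {min a b..max a b}" "f b \<in> f ` {min a b..max a b}" by auto
  have "z \<in> f ` {min a b..max a b}"
  proof (cases "f a \<le> f b")
    case True
    then show ?thesis using mem_is_interval_1_I[OF iv ab(1) ab(2)] assms(3,4) by (auto simp: min_def max_def)
  next
    case False
    then show ?thesis using mem_is_interval_1_I[OF iv ab(2) ab(1)] assms(3,4) by (auto simp: min_def max_def)
  qed
  then show ?thesis by auto
qed

definition piece :: "real set \<Rightarrow> real \<Rightarrow> real set" where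
  "piece P x = {y. sameP P x y}"

definition dec :: "(real \<Rightarrow> real) \<Rightarrow> real set \<Rightarrow> real \<Rightarrow> bool" where
  "dec f P x \<longleftrightarrow> strict_antimono_on (piece P x) f"

lemma piece_eq: "sameP P x y \<Longrightarrow> piece P x = piece P y"
  unfolding piece_def using sameP_trans sameP_sym by blast

lemma dec_eq: "sameP P x y \<Longrightarrow> dec f P x = dec f P y"
  unfolding dec_def using piece_eq by metis

lemma piece_interval: "is_interval (piece P x)"
  unfolding is_interval_1 piece_def
proof (intro ballI allI impI, elim conjE)
  fix a b c assume a: "a \<in> {y. sameP P x y}" "b \<in> {y. sameP P x y}" "a \<le> c" "c \<le> b"
  then have "sameP P a b" using sameP_trans sameP_sym by blast
  then have "sameP P a c" using sameP_conv a by (auto simp: min_def max_def)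
  then show "c \<in> {y. sameP P x y}" using a sameP_trans by blast
qed

lemma piece_mono:
  assumes "adm f P" "inj_on f XX"
  shows "strict_mono_on (piece P x) f \<or> strict_antimono_on (piece P x) f"
proof -
  have sub: "piece P x \<subseteq> XX - P" unfolding piece_def using sameP_notin by blast
  have "continuous_on (piece P x) f"
    unfolding continuous_on_eq_continuous_within
  proof
    fix t assume "t \<in> piece P x"
    then have "continuous (at t within XX) f" using sub assms(1) unfolding adm_def by auto
    then show "continuous (at t within piece P x) f"
      using continuous_within_subset sub by blast
  qed
  moreover have "inj_on f (piece P x)" using assms(2) sub inj_on_subset by blast
  ultimately show ?thesis
    using injective_eq_monotone_map[OF piece_interval] by blast
qed

lemma dis_in_piece:
  assumes "adm f P" "inj_on f XX" "sameP P x y" "sameP P x z" "y \<noteq> z"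
  shows "dis f y z \<longleftrightarrow> dec f P x"
proof -
  have yz: "y \<in> piece P x" "z \<in> piece P x" using assms unfolding piece_def by auto
  consider "strict_mono_on (piece P x) f" | "strict_antimono_on (piece P x) f"
    using piece_mono[OF assms(1,2)] by blast
  then show ?thesis
  proof cases
    case 1
    then have nd: "\<not> dis f y z"
      using yz assms(5) unfolding strict_mono_on_def dis_def by (metis less_asym)
    have "\<not> dec f P x"
    proof
      assume "dec f P x"
      then have "strict_antimono_on (piece P x) f" unfolding dec_def .
      then show False using 1 yz assms(5) unfolding strict_mono_on_def monotone_on_def
        by (metis less_asym linorder_neq_iff)
    qed
    then show ?thesis using nd by simp
  next
    case 2
    then have "dis f y z"
      using yz assms(5) unfolding monotone_on_def dis_def by (metis linorder_neq_iff)
    then show ?thesis using 2 unfolding dec_def by simp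
  qed
qed

lemma dis_outside:
  assumes "adm f P" "inj_on f XX" "sameP P m m'" "r \<in> XX" "\<not> sameP P m r"
  shows "dis f r m \<longleftrightarrow> dis f r m'"
proof -
  have mm: "m \<in> XX" "m' \<in> XX" "m \<notin> P" using sameP_notin[OF assms(3)] by auto
  have rm: "r \<noteq> m" using assms(5) sameP_refl mm by blast
  have rm': "r \<noteq> m'" using assms(3,5) by blast
  have nb: "\<not> (min m m' \<le> r \<and> r \<le> max m m')"
    using sameP_conv[OF assms(3)] assms(5) by blast
  have fnb: "\<not> (min (f m) (f m') \<le> f r \<and> f r \<le> max (f m) (f m'))"
  proof
    assume "min (f m) (f m') \<le> f r \<and> f r \<le> max (f m) (f m')"
    then obtain t where t: "min m m' \<le> t" "t \<le> max m m'" "f t = f r"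
      using sameP_ivt[OF assms(1,3)] by blast
    have "t \<in> XX" using t mm unfolding XX_iff by (auto simp: min_def max_def split: if_splits)
    then have "t = r" using assms(2,4) t(3) by (auto simp: inj_on_def)
    then show False using nb t by auto
  qed
  have "f r \<noteq> f m" "f r \<noteq> f m'" using fnb by (auto simp: min_def max_def split: if_splits)
  then show ?thesis using nb fnb unfolding dis_def by (auto simp: min_def max_def split: if_splits)
qed

lemma slide:
  assumes adm: "adm f P" and inj: "inj_on f XX" and fM: "finite M"
    and M: "M \<subseteq> XX - P" and M': "M' \<subseteq> XX - P"
    and bh: "bij_betw h M M'" and sh: "\<forall>m\<in>M. sameP P m (h m)"
  shows "invs f (P \<union> M) = invs f (P \<union> M')"
proof -
  define H where "H x = (if x \<in> M then h x else x)" for x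
  have fP: "finite P" using adm unfolding adm_def by auto
  have fM': "finite M'" using bh fM bij_betw_finite by blast
  have HM: "\<And>z. z \<in> M \<Longrightarrow> sameP P z (H z)" using sh unfolding H_def by auto
  have HP: "\<And>z. z \<notin> M \<Longrightarrow> H z = z" unfolding H_def by auto
  have PM: "P \<inter> M = {}" using M by auto
  have hM': "h ` M = M'" using bh by (simp add: bij_betw_def)
  have injh: "inj_on h M" using bh by (simp add: bij_betw_def)
  have injH: "inj_on H (P \<union> M)"
  proof (rule inj_onI)
    fix x y assume x: "x \<in> P \<union> M" and y: "y \<in> P \<union> M" and e: "H x = H y"
    show "x = y"
    proof (cases "x \<in> M")
      case True
      note xM = True
      show ?thesis
      proof (cases "y \<in> M")
        case True
        then show ?thesis using xM e injh unfolding H_def by (auto simp: inj_on_def)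
      next
        case False
        then have "y \<in> P" using y by auto
        moreover have "H x \<in> M'" using xM hM' unfolding H_def by auto
        ultimately show ?thesis using e HP False M' by auto
      qed
    next
      case False
      note xM = False
      then have xP: "x \<in> P" using x by auto
      show ?thesis
      proof (cases "y \<in> M")
        case True
        have "H y \<in> M'" using True hM' unfolding H_def by auto
        then show ?thesis using e HP xM xP M' by auto
      next
        case False
        then show ?thesis using e HP xM by auto
      qed
    qed
  qed
  have imH: "H ` (P \<union> M) = P \<union> M'"
  proof -
    have "H ` (P \<union> M) = H ` P \<union> H ` M" by auto
    also have "H ` P = P" using PM HP by force
    also have "H ` M = h ` M" unfolding H_def by auto
    finally show ?thesis using hM' by simp
  qed
  have disH: "dis f (H x) (H y) = dis f x y" if x: "x \<in> P \<union> M" and y: "y \<in> P \<union> M" for x y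
  proof (cases "x \<in> M \<and> y \<in> M \<and> sameP P x y")
    case True
    show ?thesis
    proof (cases "x = y")
      case True then show ?thesis by simp
    next
      case False
      then have ne: "H x \<noteq> H y" using injH x y by (auto simp: inj_on_def)
      have s1: "sameP P x (H x)" using HM True by auto
      have s2: "sameP P x (H y)" using HM True sameP_trans by blast
      have s0: "sameP P x x" using True sameP_trans sameP_sym by blast
      have "dis f x y = dec f P x" using dis_in_piece[OF adm inj s0 _ False] True by auto
      moreover have "dis f (H x) (H y) = dec f P x" using dis_in_piece[OF adm inj s1 s2 ne] .
      ultimately show ?thesis by simp
    qed
  next
    case False
    have xX: "x \<in> XX" "y \<in> XX" using x y M adm unfolding adm_def by auto
    have step1: "dis f x y = dis f x (H y)"
    proof (cases "y \<in> M")
      case True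
      have "\<not> sameP P y x"
      proof
        assume s: "sameP P y x"
        then have "x \<notin> P" using sameP_notin by blast
        then have "x \<in> M" using x by auto
        then show False using False True s sameP_sym by blast
      qed
      then show ?thesis using dis_outside[OF adm inj HM[OF True] xX(1)] by simp
    next
      case False then show ?thesis using HP by simp
    qed
    have step2: "dis f x (H y) = dis f (H x) (H y)"
    proof (cases "x \<in> M")
      case True
      have HyX: "H y \<in> XX"
        using y xX HM sameP_notin by (cases "y \<in> M") (auto simp: HP)
      have "\<not> sameP P x (H y)"
      proof
        assume s: "sameP P x (H y)"
        show False
        proof (cases "y \<in> M")
          case True
          then have "sameP P x y" using s HM sameP_trans sameP_sym by blast
          then show False using False True \<open>x \<in> M\<close> by blast
        next
          case False
          then have "H y \<in> P" using y HP by auto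
          then show False using s sameP_notin by blast
        qed
      qed
      then have "dis f (H y) x = dis f (H y) (H x)"
        using dis_outside[OF adm inj HM[OF True] HyX] by simp
      then show ?thesis using dis_sym by metis
    next
      case False then show ?thesis using HP by simp
    qed
    show ?thesis using step1 step2 by simp
  qed
  let ?S = "{(x,y). x \<in> P \<union> M \<and> y \<in> P \<union> M \<and> dis f x y}"
  let ?S' = "{(x,y). x \<in> P \<union> M' \<and> y \<in> P \<union> M' \<and> dis f x y}"
  have "(\<lambda>(x,y). (H x, H y)) ` ?S = ?S'"
  proof
    show "(\<lambda>(x,y). (H x, H y)) ` ?S \<subseteq> ?S'"
      using imH disH by auto
  next
    show "?S' \<subseteq> (\<lambda>(x,y). (H x, H y)) ` ?S"
    proof
      fix z assume z: "z \<in> ?S'"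
      then obtain u v where uv: "z = (u,v)" "u \<in> P \<union> M'" "v \<in> P \<union> M'" "dis f u v" by auto
      then obtain x y where "x \<in> P \<union> M" "y \<in> P \<union> M" "u = H x" "v = H y"
        using imH by (metis imageE)
      then show "z \<in> (\<lambda>(x,y). (H x, H y)) ` ?S" using uv disH by (auto intro!: image_eqI[where x="(x,y)"])
    qed
  qed
  moreover have "inj_on (\<lambda>(x,y). (H x, H y)) ?S"
    using injH by (auto simp: inj_on_def)
  ultimately have "card ?S' = card ?S" using card_image by fastforce
  then have "2 * invs f (P \<union> M) = 2 * invs f (P \<union> M')"
    using invs_dis2[of "P \<union> M" f] invs_dis2[of "P \<union> M'" f] fP fM fM' by simp
  then show ?thesis by simp
qed

lemma good3_indep:
  assumes adm: "adm f P" and inj: "inj_on f XX" and g: "good3 P M" and g': "good3 P M'"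
  shows "invs f (P \<union> M) = invs f (P \<union> M')"
proof -
  define C where "C m = {z. sameP P m z}" for m
  have M: "finite M" "M \<subseteq> XX - P" and M': "finite M'" "M' \<subseteq> XX - P" using g g' unfolding good3_def by auto
  have cM: "card (M \<inter> C m) = 3" "card (M' \<inter> C m) = 3" if "m \<in> XX - P" for m
  proof -
    have "M \<inter> C m = {z \<in> M. sameP P m z}" "M' \<inter> C m = {z \<in> M'. sameP P m z}" unfolding C_def by auto
    then show "card (M \<inter> C m) = 3" "card (M' \<inter> C m) = 3" using g g' that unfolding good3_def by auto
  qed
  define bm where "bm m = (SOME b. bij_betw b (M \<inter> C m) (M' \<inter> C m))" for m
  have bmb: "bij_betw (bm m) (M \<inter> C m) (M' \<inter> C m)" if "m \<in> XX - P" for m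
  proof -
    have "\<exists>b. bij_betw b (M \<inter> C m) (M' \<inter> C m)"
      by (rule finite_same_card_bij) (use M M' cM[OF that] in auto)
    then show ?thesis unfolding bm_def by (rule someI_ex)
  qed
  have Ceq: "C m1 = C m2" if "sameP P m1 m2" for m1 m2
    using piece_eq[OF that] unfolding piece_def C_def .
  define h where "h m = bm m m" for m
  have mC: "m \<in> C m" if "m \<in> XX - P" for m using that sameP_refl unfolding C_def by auto
  have hs: "sameP P m (h m)" "h m \<in> M'" if "m \<in> M" for m
  proof -
    have mX: "m \<in> XX - P" using that M by auto
    have "h m \<in> M' \<inter> C m" unfolding h_def using bmb[OF mX] mC[OF mX] that
      by (auto simp: bij_betw_def)
    then show "sameP P m (h m)" "h m \<in> M'" unfolding C_def by auto
  qed
  have "bij_betw h M M'"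
    unfolding bij_betw_def
  proof
    show "inj_on h M"
    proof (rule inj_onI)
      fix m1 m2 assume m: "m1 \<in> M" "m2 \<in> M" "h m1 = h m2"
      then have "sameP P m1 m2" using hs sameP_trans sameP_sym by metis
      then have CC: "C m1 = C m2" using Ceq by blast
      then have "bm m1 = bm m2" unfolding bm_def by simp
      moreover have "m1 \<in> M \<inter> C m1" "m2 \<in> M \<inter> C m1" using m M mC CC by auto
      moreover have "inj_on (bm m1) (M \<inter> C m1)" using bmb m M by (auto simp: bij_betw_def)
      ultimately show "m1 = m2" using m(3) unfolding h_def by (metis inj_onD)
    qed
  next
    show "h ` M = M'"
    proof
      show "h ` M \<subseteq> M'" using hs by auto
    next
      show "M' \<subseteq> h ` M"
      proof
        fix m' assume m': "m' \<in> M'"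
        then have mX: "m' \<in> XX - P" using M' by auto
        have "M \<inter> C m' \<noteq> {}" using cM[OF mX] by auto
        then obtain m0 where m0: "m0 \<in> M" "m0 \<in> C m'" by auto
        have s0: "sameP P m' m0" using m0 unfolding C_def by auto
        have m0X: "m0 \<in> XX - P" using m0 M by auto
        have "m' \<in> M' \<inter> C m0" using m' Ceq[OF s0] mC[OF mX] by auto
        then obtain m where m: "m \<in> M \<inter> C m0" "bm m0 m = m'"
          using bmb[OF m0X] by (metis bij_betw_def imageE)
        have "C m = C m0" using m(1) Ceq sameP_sym unfolding C_def by auto
        then have "bm m = bm m0" unfolding bm_def by simp
        then have "h m = m'" using m unfolding h_def by simp
        then show "m' \<in> h ` M" using m by auto
      qed
    qed
  qed
  then show ?thesis
    using slide[OF adm inj M(1) M(2) M'(2) _ ] hs by blast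
qed

definition lo :: "real set \<Rightarrow> real \<Rightarrow> real" where
  "lo P x = Max {p \<in> P. p < x}"

definition hi :: "real set \<Rightarrow> real \<Rightarrow> real" where
  "hi P x = Min (insert 1 {p \<in> P. x < p})"

lemma lo_props:
  assumes "finite P" "0 \<in> P" "0 < x"
  shows "lo P x \<in> P" "lo P x < x" "\<And>p. p \<in> P \<Longrightarrow> p < x \<Longrightarrow> p \<le> lo P x"
proof -
  have ne: "{p \<in> P. p < x} \<noteq> {}" using assms by auto
  have f: "finite {p \<in> P. p < x}" using assms by auto
  show "lo P x \<in> P" "lo P x < x" using Max_in[OF f ne] unfolding lo_def by auto
  show "\<And>p. p \<in> P \<Longrightarrow> p < x \<Longrightarrow> p \<le> lo P x" using Max_ge[OF f] unfolding lo_def by auto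
qed

lemma hi_props:
  assumes "finite P" "x < 1"
  shows "x < hi P x" "hi P x \<le> 1" "\<And>p. p \<in> P \<Longrightarrow> x < p \<Longrightarrow> hi P x \<le> p"
proof -
  have f: "finite (insert 1 {p \<in> P. x < p})" using assms by auto
  show "x < hi P x" unfolding hi_def using assms f by (subst Min_gr_iff) auto
  show "hi P x \<le> 1" unfolding hi_def using f by (rule Min_le) auto
  show "\<And>p. p \<in> P \<Longrightarrow> x < p \<Longrightarrow> hi P x \<le> p" unfolding hi_def using f by (intro Min_le) auto
qed

lemma sameP_gap:
  assumes "finite P" "p \<in> P" "P \<subseteq> XX" "p < y" "y < hi P p" "p < z" "z < hi P p"
  shows "sameP P y z"
proof -
  have p1: "p < 1" "0 \<le> p" using assms(2,3) by (auto simp: XX_def)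
  have h: "hi P p \<le> 1" "\<And>q. q \<in> P \<Longrightarrow> p < q \<Longrightarrow> hi P p \<le> q" using hi_props[OF assms(1) p1(1)] by auto
  show ?thesis unfolding sameP_def XX_iff
  proof (intro conjI ballI)
    fix q assume q: "q \<in> P"
    show "\<not> (min y z \<le> q \<and> q \<le> max y z)"
    proof
      assume a: "min y z \<le> q \<and> q \<le> max y z"
      then have "p < q" using assms by (auto simp: min_def split: if_splits)
      then have "hi P p \<le> q" using h q by auto
      then show False using a assms by (auto simp: max_def split: if_splits)
    qed
  qed (use assms p1 h in auto)
qed

lemma lo_in_XX:
  assumes "P \<subseteq> XX" "0 \<in> P" "x \<in> XX - P"
  shows "0 < x"
  using assms unfolding XX_iff by (metis DiffE XX_iff less_eq_real_def)

lemma x_lt_hi_lo: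
  assumes "finite P" "0 \<in> P" "P \<subseteq> XX" "x \<in> XX - P"
  shows "x < hi P (lo P x)"
proof -
  have x0: "0 < x" using lo_in_XX assms by blast
  note L = lo_props[OF assms(1,2) x0]
  have l1: "lo P x < 1" using L assms(3,4) by (auto simp: XX_def)
  have "x < Min (insert 1 {p \<in> P. lo P x < p})"
  proof (subst Min_gr_iff)
    show "\<forall>a\<in>insert 1 {p \<in> P. lo P x < p}. x < a"
    proof
      fix a assume a: "a \<in> insert 1 {p \<in> P. lo P x < p}"
      show "x < a"
      proof (cases "a = 1")
        case True then show ?thesis using assms(4) by (auto simp: XX_def)
      next
        case False
        then have "a \<in> P" "lo P x < a" using a by auto
        then show ?thesis using L(3)[of a] assms(4) by (cases "a < x") (auto, metis linorder_neqE_linordered_idom)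
      qed
    qed
  qed (use assms in auto)
  then show ?thesis unfolding hi_def .
qed

lemma ex_good3:
  assumes fP: "finite P" and P0: "0 \<in> P" and PX: "P \<subseteq> XX"
  shows "\<exists>M. good3 P M"
proof -
  define T where "T p = {p + (hi P p - p) / 4, p + (hi P p - p) / 2, p + 3 * (hi P p - p) / 4}" for p
  define M where "M = (\<Union>p\<in>P. T p)"
  have hp: "p < hi P p" "hi P p \<le> 1" if "p \<in> P" for p
  proof -
    have "p < 1" using that PX by (auto simp: XX_def)
    then show "p < hi P p" "hi P p \<le> 1" using hi_props[OF fP, of p] by auto
  qed
  have Tin: "p < m \<and> m < hi P p" if "p \<in> P" "m \<in> T p" for p m
  proof -
    have "p < hi P p" using hp[OF that(1)] by auto
    then show ?thesis using that unfolding T_def by (auto simp: field_simps)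
  qed
  have cT: "card (T p) = 3" if "p \<in> P" for p
    using hp[OF that] unfolding T_def by auto
  have same_T: "sameP P m m'" if "p \<in> P" "m \<in> T p" "m' \<in> T p" for p m m'
    using sameP_gap[OF fP that(1) PX] Tin that by auto
  have MX: "M \<subseteq> XX - P"
  proof
    fix m assume "m \<in> M"
    then obtain p where p: "p \<in> P" "m \<in> T p" unfolding M_def by auto
    then have "sameP P m m" using same_T by blast
    then show "m \<in> XX - P" using sameP_notin by blast
  qed
  have "card {m \<in> M. sameP P x m} = 3" if x: "x \<in> XX - P" for x
  proof -
    have x0: "0 < x" using lo_in_XX PX P0 x by blast
    note L = lo_props[OF fP P0 x0]
    have xh: "x < hi P (lo P x)" using x_lt_hi_lo[OF fP P0 PX x] .
    have "{m \<in> M. sameP P x m} = T (lo P x)"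
    proof
      show "T (lo P x) \<subseteq> {m \<in> M. sameP P x m}"
      proof
        fix m assume m: "m \<in> T (lo P x)"
        have "sameP P x m" using sameP_gap[OF fP L(1) PX] Tin[OF L(1) m] L(2) xh by auto
        then show "m \<in> {m \<in> M. sameP P x m}" using m L(1) unfolding M_def by auto
      qed
    next
      show "{m \<in> M. sameP P x m} \<subseteq> T (lo P x)"
      proof
        fix m assume m: "m \<in> {m \<in> M. sameP P x m}"
        then obtain p where p: "p \<in> P" "m \<in> T p" "sameP P x m" unfolding M_def by auto
        have pm: "p < m" "m < hi P p" using Tin p by auto
        have "p = lo P x"
        proof (rule ccontr)
          assume ne: "p \<noteq> lo P x"
          show False
          proof (cases "p < lo P x")
            case True
            have "hi P p \<le> lo P x" using hi_props(3)[OF fP, of p "lo P x"] True L(1) hp[OF p(1)] by auto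
            then have "m < lo P x" using pm by auto
            then have "min x m \<le> lo P x \<and> lo P x \<le> max x m" using L(2) by auto
            then show False using p(3) L(1) unfolding sameP_def by blast
          next
            case False
            then have "lo P x < p" using ne by auto
            then have "\<not> p < x" using L(3)[OF p(1)] by auto
            then have "x < p" using x p(1) by (metis DiffE linorder_neqE_linordered_idom)
            then have "min x m \<le> p \<and> p \<le> max x m" using pm by auto
            then show False using p(3) p(1) unfolding sameP_def by blast
          qed
        qed
        then show "m \<in> T (lo P x)" using p by simp
      qed
    qed
    then show ?thesis using cT[OF L(1)] by simp
  qed
  moreover have "finite M" unfolding M_def T_def using fP by auto
  ultimately show ?thesis using MX unfolding good3_def by blast
qed

lemma adm_mono:
  assumes "adm f P" "finite D" "D \<subseteq> XX"
  shows "adm f (P \<union> D)"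
  using assms unfolding adm_def by auto

lemma cnt_piece:
  assumes adm: "adm f P" and inj: "inj_on f XX" and cx: "sameP P c x"
    and S: "finite S" "S \<subseteq> XX" "x \<notin> S"
  shows "card {r \<in> S. dis f r x} = card {r \<in> S. \<not> sameP P c r \<and> dis f r c}
           + (if dec f P c then card {r \<in> S. sameP P c r} else 0)"
proof -
  have A: "{r \<in> S. \<not> sameP P c r \<and> dis f r x} = {r \<in> S. \<not> sameP P c r \<and> dis f r c}"
    using dis_outside[OF adm inj cx] S by blast
  have B: "{r \<in> S. sameP P c r \<and> dis f r x} = (if dec f P c then {r \<in> S. sameP P c r} else {})"
  proof -
    have "dis f r x = dec f P c" if "r \<in> S" "sameP P c r" for r
    proof -
      have "r \<noteq> x" using that S by auto
      then show ?thesis using dis_in_piece[OF adm inj that(2) cx] by simp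
    qed
    then show ?thesis by auto
  qed
  have "{r \<in> S. dis f r x} = {r \<in> S. \<not> sameP P c r \<and> dis f r x} \<union> {r \<in> S. sameP P c r \<and> dis f r x}"
    by auto
  moreover have "card ({r \<in> S. \<not> sameP P c r \<and> dis f r x} \<union> {r \<in> S. sameP P c r \<and> dis f r x})
      = card {r \<in> S. \<not> sameP P c r \<and> dis f r x} + card {r \<in> S. sameP P c r \<and> dis f r x}"
    by (rule card_Un_disjoint) (use S in auto)
  ultimately show ?thesis using A B by simp
qed

lemma sameP_insert:
  "sameP (insert c P) x m \<longleftrightarrow> sameP P x m \<and> \<not> (min x m \<le> c \<and> c \<le> max x m)"
  unfolding sameP_def by auto


lemma W2:
  assumes adm: "adm f P" and inj: "inj_on f XX" and c: "c \<in> XX - P"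
    and g: "good3 P M" and g': "good3 (insert c P) M'"
  shows "even (invs f (P \<union> M)) = even (invs f (insert c P \<union> M'))"
proof -
  have fP: "finite P" and P0: "0 \<in> P" and PX: "P \<subseteq> XX" using adm unfolding adm_def by auto
  have c0: "0 < c" using lo_in_XX[OF PX P0 c] .
  define a where "a = lo P c"
  define b where "b = hi P a"
  have a: "a \<in> P" "a < c" using lo_props[OF fP P0 c0] unfolding a_def by auto
  have cb: "c < b" using x_lt_hi_lo[OF fP P0 PX c] unfolding a_def b_def .
  have gap: "sameP P y z" if "a < y" "y < b" "a < z" "z < b" for y z
    using sameP_gap[OF fP a(1) PX] that unfolding b_def by auto
  define u1 where "u1 = a + (c - a) / 4"
  define u2 where "u2 = a + (c - a) / 2"
  define u3 where "u3 = a + 3 * (c - a) / 4"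
  define v1 where "v1 = c + (b - c) / 4"
  define v2 where "v2 = c + (b - c) / 2"
  define v3 where "v3 = c + 3 * (b - c) / 4"
  have ord: "a < u1" "u1 < u2" "u2 < u3" "u3 < c" "c < v1" "v1 < v2" "v2 < v3" "v3 < b"
    using a cb unfolding u1_def u2_def u3_def v1_def v2_def v3_def by (auto simp: field_simps)
  define U where "U = {u1, u2, u3}"
  define V where "V = {v1, v2, v3}"
  have sU: "\<And>u. u \<in> U \<Longrightarrow> sameP P c u" using gap ord a cb unfolding U_def by auto
  have sV: "\<And>v. v \<in> V \<Longrightarrow> sameP P c v" using gap ord a cb unfolding V_def by auto
  have Ult: "\<And>u. u \<in> U \<Longrightarrow> u < c" using ord unfolding U_def by auto
  have Vgt: "\<And>v. v \<in> V \<Longrightarrow> c < v" using ord unfolding V_def by auto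
  have cU: "card U = 3" "card V = 3" using ord unfolding U_def V_def by auto
  have scc: "sameP P c c" using sameP_refl c by auto
  have fM: "finite M" "M \<subseteq> XX - P" using g unfolding good3_def by auto
  define M0 where "M0 = {m \<in> M. \<not> sameP P c m} \<union> U"
  define M0' where "M0' = M0 \<union> V"
  have UX: "U \<subseteq> XX - P" "V \<subseteq> XX - P" using sU sV sameP_notin by blast+
  have g0: "good3 P M0"
    unfolding good3_def
  proof (intro conjI ballI)
    show "finite M0" unfolding M0_def U_def using fM by auto
    show "M0 \<subseteq> XX - P" unfolding M0_def using fM UX by auto
  next
    fix x assume x: "x \<in> XX - P"
    show "card {m \<in> M0. sameP P x m} = 3"
    proof (cases "sameP P c x")
      case True
      have "{m \<in> M0. sameP P x m} = U"
        using True sU sameP_trans sameP_sym unfolding M0_def by blast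
      then show ?thesis using cU by simp
    next
      case False
      have "{m \<in> M0. sameP P x m} = {m \<in> M. sameP P x m}"
        using False sU sameP_trans sameP_sym unfolding M0_def by blast
      then show ?thesis using g x unfolding good3_def by simp
    qed
  qed
  have g0': "good3 (insert c P) M0'"
    unfolding good3_def
  proof (intro conjI ballI)
    show "finite M0'" unfolding M0'_def M0_def U_def V_def using fM by auto
    show "M0' \<subseteq> XX - insert c P"
      unfolding M0'_def M0_def using fM UX scc Ult Vgt by fastforce
  next
    fix x assume x: "x \<in> XX - insert c P"
    have xP: "x \<in> XX - P" "x \<noteq> c" using x by auto
    show "card {m \<in> M0'. sameP (insert c P) x m} = 3"
    proof (cases "sameP P c x")
      case True
      show ?thesis
      proof (cases "x < c")
        case True
        have "{m \<in> M0'. sameP (insert c P) x m} = U"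
        proof
          show "{m \<in> M0'. sameP (insert c P) x m} \<subseteq> U"
          proof
            fix m assume m: "m \<in> {m \<in> M0'. sameP (insert c P) x m}"
            then have sm: "sameP P x m" "\<not> (min x m \<le> c \<and> c \<le> max x m)" using sameP_insert by auto
            have "sameP P c m" using sm(1) \<open>sameP P c x\<close> sameP_trans by blast
            then have "m \<notin> {m \<in> M. \<not> sameP P c m}" by auto
            moreover have "m \<notin> V" using Vgt sm(2) True by force
            ultimately show "m \<in> U" using m unfolding M0'_def M0_def by auto
          qed
        next
          show "U \<subseteq> {m \<in> M0'. sameP (insert c P) x m}"
          proof
            fix u assume u: "u \<in> U"
            have "sameP P x u" using sU[OF u] \<open>sameP P c x\<close> sameP_trans sameP_sym by blast
            moreover have "\<not> (min x u \<le> c \<and> c \<le> max x u)" using Ult[OF u] True by auto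
            ultimately show "u \<in> {m \<in> M0'. sameP (insert c P) x m}"
              using u sameP_insert unfolding M0'_def M0_def by auto
          qed
        qed
        then show ?thesis using cU by simp
      next
        case False
        then have xc: "c < x" using xP by auto
        have "{m \<in> M0'. sameP (insert c P) x m} = V"
        proof
          show "{m \<in> M0'. sameP (insert c P) x m} \<subseteq> V"
          proof
            fix m assume m: "m \<in> {m \<in> M0'. sameP (insert c P) x m}"
            then have sm: "sameP P x m" "\<not> (min x m \<le> c \<and> c \<le> max x m)" using sameP_insert by auto
            have "sameP P c m" using sm(1) \<open>sameP P c x\<close> sameP_trans by blast
            then have "m \<notin> {m \<in> M. \<not> sameP P c m}" by auto
            moreover have "m \<notin> U" using Ult sm(2) xc by force
            ultimately show "m \<in> V" using m unfolding M0'_def M0_def by auto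
          qed
        next
          show "V \<subseteq> {m \<in> M0'. sameP (insert c P) x m}"
          proof
            fix u assume u: "u \<in> V"
            have "sameP P x u" using sV[OF u] \<open>sameP P c x\<close> sameP_trans sameP_sym by blast
            moreover have "\<not> (min x u \<le> c \<and> c \<le> max x u)" using Vgt[OF u] xc by auto
            ultimately show "u \<in> {m \<in> M0'. sameP (insert c P) x m}"
              using u sameP_insert unfolding M0'_def M0_def by auto
          qed
        qed
        then show ?thesis using cU by simp
      qed
    next
      case False
      have "{m \<in> M0'. sameP (insert c P) x m} = {m \<in> M. sameP P x m}"
      proof
        show "{m \<in> M0'. sameP (insert c P) x m} \<subseteq> {m \<in> M. sameP P x m}"
        proof
          fix m assume m: "m \<in> {m \<in> M0'. sameP (insert c P) x m}"
          then have sm: "sameP P x m" using sameP_insert by auto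
          have "m \<notin> U \<union> V" using sm sU sV False sameP_trans sameP_sym by blast
          then show "m \<in> {m \<in> M. sameP P x m}" using m sm unfolding M0'_def M0_def by auto
        qed
      next
        show "{m \<in> M. sameP P x m} \<subseteq> {m \<in> M0'. sameP (insert c P) x m}"
        proof
          fix m assume m: "m \<in> {m \<in> M. sameP P x m}"
          then have sm: "sameP P x m" by auto
          have nc: "\<not> sameP P c m" using sm False sameP_trans sameP_sym by blast
          have "\<not> (min x m \<le> c \<and> c \<le> max x m)"
          proof
            assume "min x m \<le> c \<and> c \<le> max x m"
            then have "sameP P x c" using sameP_conv[OF sm] by auto
            then show False using False sameP_sym by blast
          qed
          then show "m \<in> {m \<in> M0'. sameP (insert c P) x m}"
            using m nc sameP_insert unfolding M0'_def M0_def by auto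
        qed
      qed
      then show ?thesis using g xP unfolding good3_def by simp
    qed
  qed
  have adm': "adm f (insert c P)" using adm_mono[OF adm, of "{c}"] c by auto
  have e1: "invs f (P \<union> M) = invs f (P \<union> M0)" using good3_indep[OF adm inj g g0] .
  have e2: "invs f (insert c P \<union> M') = invs f (insert c P \<union> M0')" using good3_indep[OF adm' inj g' g0'] .
  define Q0 where "Q0 = P \<union> M0"
  have fQ0: "finite Q0" "Q0 \<subseteq> XX" unfolding Q0_def using g0 fP PX unfolding good3_def by auto
  have eqQ: "insert c P \<union> M0' = insert v3 (insert v2 (insert v1 (insert c Q0)))"
    unfolding Q0_def M0'_def V_def by auto
  have cQ: "c \<notin> Q0" using c scc Ult unfolding Q0_def M0_def by auto
  have vQ: "v \<notin> Q0" if "v \<in> V" for v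
  proof -
    have "v \<notin> P" using sV[OF that] sameP_notin by blast
    moreover have "v \<notin> U" using Vgt[OF that] Ult by force
    ultimately show ?thesis using sV[OF that] unfolding Q0_def M0_def by auto
  qed
  have vv: "v1 \<in> V" "v2 \<in> V" "v3 \<in> V" unfolding V_def by auto
  have n1: "v1 \<notin> insert c Q0" using vQ[OF vv(1)] ord by auto
  have n2: "v2 \<notin> insert v1 (insert c Q0)" using vQ[OF vv(2)] ord by auto
  have n3: "v3 \<notin> insert v2 (insert v1 (insert c Q0))" using vQ[OF vv(3)] ord by auto
  have vX: "c \<in> XX" "v1 \<in> XX" "v2 \<in> XX" "v3 \<in> XX" using c UX vv by auto
  define K where "K = card {r \<in> Q0. \<not> sameP P c r \<and> dis f r c}"
  define d where "d = (if dec f P c then 1 else (0::nat))"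
  have Kc: "{r \<in> insert y S. \<not> sameP P c r \<and> dis f r c} = {r \<in> S. \<not> sameP P c r \<and> dis f r c}"
    if "sameP P c y" for y S using that by auto
  have sQ0: "{r \<in> Q0. sameP P c r} = U"
    using sU sameP_notin unfolding Q0_def M0_def by blast
  have cnt: "card {r \<in> S. dis f r x} = K + d * card {r \<in> S. sameP P c r}"
    if "sameP P c x" "finite S" "S \<subseteq> XX" "x \<notin> S"
      "{r \<in> S. \<not> sameP P c r \<and> dis f r c} = {r \<in> Q0. \<not> sameP P c r \<and> dis f r c}" for x S
    using cnt_piece[OF adm inj that(1-4)] that(5) unfolding K_def d_def by simp
  have sv: "sameP P c v1" "sameP P c v2" "sameP P c v3" using sV vv by auto
  have t0: "card {r \<in> Q0. dis f r c} = K + d * 3"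
    using cnt[OF scc fQ0 cQ] sQ0 cU by simp
  have t1: "card {r \<in> insert c Q0. dis f r v1} = K + d * 4"
  proof -
    have "{r \<in> insert c Q0. sameP P c r} = insert c U" using sQ0 scc by auto
    moreover have "card (insert c U) = 4"
    proof -
      have "c \<notin> U" "finite U" using Ult unfolding U_def by fastforce+
      then show ?thesis using cU by simp
    qed
    moreover have "{r \<in> insert c Q0. \<not> sameP P c r \<and> dis f r c} = {r \<in> Q0. \<not> sameP P c r \<and> dis f r c}"
      using scc by auto
    moreover have "finite (insert c Q0)" "insert c Q0 \<subseteq> XX" using fQ0 vX by auto
    ultimately show ?thesis using cnt[OF sv(1) _ _ n1] by simp
  qed
  have t2: "card {r \<in> insert v1 (insert c Q0). dis f r v2} = K + d * 5"
  proof -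
    have "{r \<in> insert v1 (insert c Q0). sameP P c r} = insert v1 (insert c U)" using sQ0 scc sv by auto
    moreover have "card (insert v1 (insert c U)) = 5"
    proof -
      have "c \<notin> U" "finite U" "v1 \<notin> insert c U" using Ult ord unfolding U_def by fastforce+
      then show ?thesis using cU by simp
    qed
    moreover have "{r \<in> insert v1 (insert c Q0). \<not> sameP P c r \<and> dis f r c} = {r \<in> Q0. \<not> sameP P c r \<and> dis f r c}"
      using scc sv by auto
    moreover have "finite (insert v1 (insert c Q0))" "insert v1 (insert c Q0) \<subseteq> XX" using fQ0 vX by auto
    ultimately show ?thesis using cnt[OF sv(2) _ _ n2] by simp
  qed
  have t3: "card {r \<in> insert v2 (insert v1 (insert c Q0)). dis f r v3} = K + d * 6"
  proof -
    have "{r \<in> insert v2 (insert v1 (insert c Q0)). sameP P c r} = insert v2 (insert v1 (insert c U))"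
      using sQ0 scc sv by auto
    moreover have "card (insert v2 (insert v1 (insert c U))) = 6"
    proof -
      have "c \<notin> U" "finite U" "v1 \<notin> insert c U" "v2 \<notin> insert v1 (insert c U)"
        using Ult ord unfolding U_def by fastforce+
      then show ?thesis using cU by simp
    qed
    moreover have "{r \<in> insert v2 (insert v1 (insert c Q0)). \<not> sameP P c r \<and> dis f r c} = {r \<in> Q0. \<not> sameP P c r \<and> dis f r c}"
      using scc sv by auto
    moreover have "finite (insert v2 (insert v1 (insert c Q0)))" "insert v2 (insert v1 (insert c Q0)) \<subseteq> XX" using fQ0 vX by auto
    ultimately show ?thesis using cnt[OF sv(3) _ _ n3] by simp
  qed
  have "invs f (insert c P \<union> M0') = invs f Q0 + (K + d * 3) + (K + d * 4) + (K + d * 5) + (K + d * 6)"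
    unfolding eqQ
    using invs_insert[OF _ n3] invs_insert[OF _ n2] invs_insert[OF _ n1] invs_insert[OF _ cQ] fQ0 t0 t1 t2 t3
    by simp
  then have "even (invs f (insert c P \<union> M0')) = even (invs f Q0)" by presburger
  then show ?thesis using e1 e2 unfolding Q0_def by simp
qed


lemma WI:
  assumes inj: "inj_on f XX" and fD: "finite D"
  shows "\<forall>P M M'. adm f P \<longrightarrow> D \<subseteq> XX \<longrightarrow> good3 P M \<longrightarrow> good3 (P \<union> D) M'
           \<longrightarrow> even (invs f (P \<union> M)) = even (invs f (P \<union> D \<union> M'))"
  using fD
proof (induction D rule: finite_induct)
  case empty
  show ?case
  proof (intro allI impI)
    fix P M M' assume "adm f P" "{} \<subseteq> XX" "good3 P M" "good3 (P \<union> {}) M'"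
    then show "even (invs f (P \<union> M)) = even (invs f (P \<union> {} \<union> M'))"
      using good3_indep[OF _ inj, of P M M'] by simp
  qed
next
  case (insert c D)
  show ?case
  proof (intro allI impI)
    fix P M M' assume adm: "adm f P" and DX: "insert c D \<subseteq> XX" and g: "good3 P M"
      and g': "good3 (P \<union> insert c D) M'"
    show "even (invs f (P \<union> M)) = even (invs f (P \<union> insert c D \<union> M'))"
    proof (cases "c \<in> P")
      case True
      then have "P \<union> insert c D = P \<union> D" by auto
      then show ?thesis using insert.IH[rule_format, of P M M'] adm DX g g' by simp
    next
      case False
      have fP: "finite P" and P0: "0 \<in> P" and PX: "P \<subseteq> XX" using adm unfolding adm_def by auto
      obtain M'' where g'': "good3 (insert c P) M''"
        using ex_good3[of "insert c P"] fP P0 PX DX by auto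
      have e1: "even (invs f (P \<union> M)) = even (invs f (insert c P \<union> M''))"
        using W2[OF adm inj _ g g''] False DX by auto
      have adm': "adm f (insert c P)" using adm_mono[OF adm, of "{c}"] DX by auto
      have eq: "P \<union> insert c D = insert c P \<union> D" by auto
      have "even (invs f (insert c P \<union> M'')) = even (invs f (insert c P \<union> D \<union> M'))"
        using insert.IH[rule_format, of "insert c P" M'' M'] adm' DX g'' g' eq by simp
      then show ?thesis using e1 eq by simp
    qed
  qed
qed

lemma W:
  assumes inj: "inj_on f XX" and a1: "adm f P1" and g1: "good3 P1 M1"
    and a2: "adm f P2" and g2: "good3 P2 M2"
  shows "even (invs f (P1 \<union> M1)) = even (invs f (P2 \<union> M2))"
proof -
  have f: "finite P1" "finite P2" "0 \<in> P1" "P1 \<subseteq> XX" "P2 \<subseteq> XX" using a1 a2 unfolding adm_def by auto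
  obtain M where g: "good3 (P1 \<union> P2) M" using ex_good3[of "P1 \<union> P2"] f by auto
  have "even (invs f (P1 \<union> M1)) = even (invs f (P1 \<union> P2 \<union> M))"
    using WI[OF inj f(2), rule_format, of P1 M1 M] a1 g1 g f by simp
  moreover have "even (invs f (P2 \<union> M2)) = even (invs f (P2 \<union> P1 \<union> M))"
    using WI[OF inj f(1), rule_format, of P2 M2 M] a2 g2 g f by (simp add: Un_commute)
  moreover have "P2 \<union> P1 = P1 \<union> P2" by auto
  ultimately show ?thesis by simp
qed

definition goodQ :: "(real \<Rightarrow> real) \<Rightarrow> real set \<Rightarrow> bool" where
  "goodQ f Q \<longleftrightarrow> (\<exists>P M. adm f P \<and> good3 P M \<and> Q = P \<union> M)"

definition eps :: "(real \<Rightarrow> real) \<Rightarrow> bool" where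
  "eps f = odd (invs f (SOME Q. goodQ f Q))"

lemma eps_eq:
  assumes inj: "inj_on f XX" and q: "goodQ f Q"
  shows "eps f = odd (invs f Q)"
proof -
  have "goodQ f (SOME Q. goodQ f Q)" using q by (rule someI)
  then obtain P1 M1 where 1: "adm f P1" "good3 P1 M1" "(SOME Q. goodQ f Q) = P1 \<union> M1"
    unfolding goodQ_def by blast
  obtain P2 M2 where 2: "adm f P2" "good3 P2 M2" "Q = P2 \<union> M2" using q unfolding goodQ_def by blast
  show ?thesis unfolding eps_def 1(3) 2(3) using W[OF inj 1(1,2) 2(1,2)] by simp
qed

lemma goodQ_ex:
  assumes "adm f P" shows "\<exists>M. good3 P M \<and> goodQ f (P \<union> M)"
  using ex_good3[of P] assms unfolding adm_def goodQ_def by blast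

lemma goodQ_fin: "goodQ f Q \<Longrightarrow> finite Q \<and> Q \<subseteq> XX"
  unfolding goodQ_def adm_def good3_def by auto

lemma sameP_lo:
  assumes fP: "finite P" and P0: "0 \<in> P" and PX: "P \<subseteq> XX" and x: "x \<in> XX - P" and y: "y \<in> XX - P"
  shows "sameP P x y \<longleftrightarrow> lo P x = lo P y"
proof
  assume s: "sameP P x y"
  have "{p \<in> P. p < x} = {p \<in> P. p < y}"
  proof -
    have "p < y" if "p \<in> P" "p < x" for p
    proof (rule ccontr)
      assume "\<not> p < y"
      then have "min x y \<le> p \<and> p \<le> max x y" using that by auto
      then show False using s that(1) unfolding sameP_def by blast
    qed
    moreover have "p < x" if "p \<in> P" "p < y" for p
    proof (rule ccontr)
      assume "\<not> p < x"
      then have "min x y \<le> p \<and> p \<le> max x y" using that by auto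
      then show False using s that(1) unfolding sameP_def by blast
    qed
    ultimately show ?thesis by blast
  qed
  then show "lo P x = lo P y" unfolding lo_def by simp
next
  assume e: "lo P x = lo P y"
  have x0: "0 < x" "0 < y" using lo_in_XX[OF PX P0] x y by auto
  note Lx = lo_props[OF fP P0 x0(1)] and Ly = lo_props[OF fP P0 x0(2)]
  show "sameP P x y"
    unfolding sameP_def
  proof (intro conjI ballI)
    fix p assume p: "p \<in> P"
    show "\<not> (min x y \<le> p \<and> p \<le> max x y)"
    proof
      assume a: "min x y \<le> p \<and> p \<le> max x y"
      have "p \<noteq> x" "p \<noteq> y" using p x y by auto
      then consider "x < p \<and> p < y" | "y < p \<and> p < x" using a by (auto simp: min_def max_def split: if_splits)
      then show False
      proof cases
        case 1
        then have "p \<le> lo P y" using Ly(3) p by auto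
        then show False using 1 e Lx(2) by auto
      next
        case 2
        then have "p \<le> lo P x" using Lx(3) p by auto
        then show False using 2 e Ly(2) by auto
      qed
    qed
  qed (use x y in auto)
qed

definition wpt :: "real set \<Rightarrow> real \<Rightarrow> real" where
  "wpt P p = p + (hi P p - p) / 2"

lemma wpt_props:
  assumes fP: "finite P" and P0: "0 \<in> P" and PX: "P \<subseteq> XX" and p: "p \<in> P"
  shows "wpt P p \<in> XX - P" "lo P (wpt P p) = p"
proof -
  have p1: "p < 1" using p PX by (auto simp: XX_def)
  note H = hi_props[OF fP p1]
  have w: "p < wpt P p" "wpt P p < hi P p" using H unfolding wpt_def by (auto simp: field_simps)
  have "sameP P (wpt P p) (wpt P p)" using sameP_gap[OF fP p PX w w] .
  then show wX: "wpt P p \<in> XX - P" using sameP_notin by blast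
  show "lo P (wpt P p) = p"
    unfolding lo_def
  proof (rule Max_eqI)
    show "finite {q \<in> P. q < wpt P p}" using fP by auto
    show "p \<in> {q \<in> P. q < wpt P p}" using p w by auto
    fix q assume q: "q \<in> {q \<in> P. q < wpt P p}"
    show "q \<le> p"
    proof (rule ccontr)
      assume "\<not> q \<le> p"
      then have "hi P p \<le> q" using H(3) q by auto
      then show False using q w by auto
    qed
  qed
qed

lemma sameP_fwd:
  assumes adm: "adm g P" and inj: "inj_on g XX" and gX: "g ` XX \<subseteq> XX" and s: "sameP P x y"
  shows "sameP (g ` P) (g x) (g y)"
proof -
  have xy: "x \<in> XX" "y \<in> XX" using sameP_notin[OF s] by auto
  show ?thesis
    unfolding sameP_def
  proof (intro conjI ballI)
    show "g x \<in> XX" "g y \<in> XX" using xy gX by auto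
  next
    fix q assume q: "q \<in> g ` P"
    then obtain p where p: "p \<in> P" "q = g p" by auto
    show "\<not> (min (g x) (g y) \<le> q \<and> q \<le> max (g x) (g y))"
    proof
      assume "min (g x) (g y) \<le> q \<and> q \<le> max (g x) (g y)"
      then obtain t where t: "min x y \<le> t" "t \<le> max x y" "g t = q"
        using sameP_ivt[OF adm s] by blast
      have st: "sameP P x t" using sameP_conv[OF s t(1,2)] .
      then have tX: "t \<in> XX - P" using sameP_notin by blast
      have "p \<in> XX" using p adm unfolding adm_def by auto
      then have "t = p" using inj t(3) p tX by (auto simp: inj_on_def)
      then show False using tX p by auto
    qed
  qed
qed

lemma corr:
  assumes adm: "adm g P" and bij: "bij_betw g XX XX"
    and gP: "0 \<in> g ` P"
  shows "\<And>x y. x \<in> XX - P \<Longrightarrow> y \<in> XX - P \<Longrightarrow> sameP (g ` P) (g x) (g y) \<longleftrightarrow> sameP P x y"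
proof -
  have fP: "finite P" and P0: "0 \<in> P" and PX: "P \<subseteq> XX" using adm unfolding adm_def by auto
  have inj: "inj_on g XX" and gX: "g ` XX = XX" using bij by (auto simp: bij_betw_def)
  have fgP: "finite (g ` P)" and gPX: "g ` P \<subseteq> XX" using fP PX gX by auto
  have gXP: "g x \<in> XX - g ` P" if "x \<in> XX - P" for x
    using that inj PX gX by (auto simp: inj_on_def)
  define Phi where "Phi p = lo (g ` P) (g (wpt P p))" for p
  have key: "lo (g ` P) (g x) = Phi (lo P x)" if x: "x \<in> XX - P" for x
  proof -
    have x0: "0 < x" using lo_in_XX[OF PX P0 x] .
    have lP: "lo P x \<in> P" using lo_props[OF fP P0 x0] by auto
    note W = wpt_props[OF fP P0 PX lP]
    have "sameP P x (wpt P (lo P x))" using sameP_lo[OF fP P0 PX x W(1)] W(2) by simp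
    then have "sameP (g ` P) (g x) (g (wpt P (lo P x)))" using sameP_fwd[OF adm inj] gX by auto
    then show ?thesis unfolding Phi_def
      using sameP_lo[OF fgP gP gPX gXP[OF x] gXP[OF W(1)]] by simp
  qed
  have PhiP: "Phi ` P = g ` P"
  proof
    show "Phi ` P \<subseteq> g ` P"
    proof
      fix q assume "q \<in> Phi ` P"
      then obtain p where p: "p \<in> P" "q = Phi p" by auto
      have "g (wpt P p) \<in> XX - g ` P" using gXP wpt_props[OF fP P0 PX p(1)] by auto
      then have "0 < g (wpt P p)" using lo_in_XX[OF gPX gP] by auto
      then show "q \<in> g ` P" using lo_props[OF fgP gP] p unfolding Phi_def by auto
    qed
  next
    show "g ` P \<subseteq> Phi ` P"
    proof
      fix q assume q: "q \<in> g ` P"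
      note W = wpt_props[OF fgP gP gPX q]
      obtain x where x: "x \<in> XX" "g x = wpt (g ` P) q" using W(1) gX by (metis DiffD1 imageE)
      have "x \<notin> P" using x W(1) by (metis DiffD2 image_eqI)
      then have "Phi (lo P x) = q" using key[of x] x W(2) by auto
      moreover have "lo P x \<in> P" using lo_props[OF fP P0] lo_in_XX[OF PX P0] x \<open>x \<notin> P\<close> by auto
      ultimately show "q \<in> Phi ` P" by auto
    qed
  qed
  have "card (g ` P) = card P" using card_image inj PX inj_on_subset by blast
  then have injPhi: "inj_on Phi P" using eq_card_imp_inj_on[OF fP, of Phi] PhiP by simp
  fix x y assume x: "x \<in> XX - P" and y: "y \<in> XX - P"
  show "sameP (g ` P) (g x) (g y) \<longleftrightarrow> sameP P x y"
  proof
    assume "sameP (g ` P) (g x) (g y)"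
    then have "lo (g ` P) (g x) = lo (g ` P) (g y)" using sameP_lo[OF fgP gP gPX gXP[OF x] gXP[OF y]] by simp
    then have "Phi (lo P x) = Phi (lo P y)" using key x y by simp
    moreover have "lo P x \<in> P" "lo P y \<in> P" using lo_props[OF fP P0] lo_in_XX[OF PX P0] x y by auto
    ultimately have "lo P x = lo P y" using injPhi by (auto simp: inj_on_def)
    then show "sameP P x y" using sameP_lo[OF fP P0 PX x y] by simp
  next
    assume "sameP P x y"
    then show "sameP (g ` P) (g x) (g y)" using sameP_fwd[OF adm inj] gX by auto
  qed
qed

lemma good3_image:
  assumes adm: "adm g P" and bij: "bij_betw g XX XX" and gP: "0 \<in> g ` P" and g: "good3 P M"
  shows "good3 (g ` P) (g ` M)"
proof -
  have fP: "finite P" and P0: "0 \<in> P" and PX: "P \<subseteq> XX" using adm unfolding adm_def by auto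
  have inj: "inj_on g XX" and gX: "g ` XX = XX" using bij by (auto simp: bij_betw_def)
  have M: "finite M" "M \<subseteq> XX - P" using g unfolding good3_def by auto
  show ?thesis
    unfolding good3_def
  proof (intro conjI ballI)
    show "finite (g ` M)" using M by auto
    show "g ` M \<subseteq> XX - g ` P"
    proof
      fix z assume "z \<in> g ` M"
      then obtain m where m: "m \<in> M" "z = g m" by auto
      have "m \<in> XX - P" using m M by auto
      then show "z \<in> XX - g ` P" using m inj PX gX by (auto simp: inj_on_def)
    qed
  next
    fix y assume y: "y \<in> XX - g ` P"
    then obtain x where x: "x \<in> XX" "y = g x" using gX by (metis DiffD1 imageE)
    have xP: "x \<in> XX - P" using x y by auto
    have "{m' \<in> g ` M. sameP (g ` P) y m'} = g ` {m \<in> M. sameP P x m}"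
      using corr[OF adm bij gP xP] M x by auto
    moreover have "{m \<in> M. sameP P x m} \<subseteq> XX" using M by auto
    then have "inj_on g {m \<in> M. sameP P x m}" using inj_on_subset[OF inj] by blast
    ultimately show "card {m' \<in> g ` M. sameP (g ` P) y m'} = 3"
      using card_image g xP unfolding good3_def by fastforce
  qed
qed

abbreviation PCH where "PCH \<equiv> PC_hat_carrier"

lemma PCH_D:
  assumes "f \<in> PCH"
  shows "f \<in> Bij XX" "bij_betw f XX XX" "inj_on f XX" "f ` XX = XX"
    "\<exists>F. finite F \<and> F \<subseteq> XX \<and> (\<forall>x\<in>XX - F. continuous (at x within XX) f)"
  using assms unfolding PC_hat_carrier_def Bij_def bij_betw_def by auto

lemma cont_id_off:
  assumes fS: "finite S" and id: "\<And>x. x \<in> XX - S \<Longrightarrow> f x = x" and x: "x \<in> XX - S"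
  shows "continuous (at x within XX) f"
proof -
  have "open (- S)" using finite_imp_closed[OF fS] by (simp add: open_Compl)
  then obtain e where e: "e > 0" "ball x e \<subseteq> - S" using x by (meson ComplI DiffD2 open_contains_ball)
  show ?thesis
  proof (rule continuous_transform_within[of x XX "\<lambda>y. y" e])
    show "continuous (at x within XX) (\<lambda>y. y)" by (rule continuous_ident)
    show "0 < e" "x \<in> XX" using e x by auto
    fix x' assume "x' \<in> XX" "dist x' x < e"
    then have "x' \<in> XX - S" using e by (auto simp: dist_commute)
    then show "x' = f x'" using id by simp
  qed
qed

lemma eps_mult:
  assumes f: "f \<in> PCH" and g: "g \<in> PCH"
  shows "eps (compose XX f g) = (eps f \<noteq> eps g)"
proof -
  note Df = PCH_D[OF f] and Dg = PCH_D[OF g]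
  obtain Ff where Ff: "finite Ff" "Ff \<subseteq> XX" "\<forall>x\<in>XX - Ff. continuous (at x within XX) f" using Df(5) by blast
  obtain Fg where Fg: "finite Fg" "Fg \<subseteq> XX" "\<forall>x\<in>XX - Fg. continuous (at x within XX) g" using Dg(5) by blast
  define gi where "gi = inv_into XX g"
  have giX: "gi y \<in> XX" if "y \<in> XX" for y using that Dg(4) unfolding gi_def by (metis inv_into_into)
  have ggi: "g (gi y) = y" if "y \<in> XX" for y using that Dg(4) unfolding gi_def by (metis f_inv_into_f)
  have gig: "gi (g x) = x" if "x \<in> XX" for x using that Dg(3) unfolding gi_def by (metis inv_into_f_f)
  have X0: "(0::real) \<in> XX" by (simp add: XX_def)
  define P where "P = insert 0 (insert (gi 0) (Fg \<union> gi ` Ff))"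
  have PX: "P \<subseteq> XX" unfolding P_def using X0 giX Fg Ff by auto
  have fP: "finite P" unfolding P_def using Fg Ff by auto
  have admg: "adm g P" unfolding adm_def using fP PX Fg unfolding P_def by auto
  have gP0: "0 \<in> g ` P" using ggi[OF X0] unfolding P_def by force
  have FfgP: "Ff \<subseteq> g ` P"
  proof
    fix y assume "y \<in> Ff" then show "y \<in> g ` P" using ggi Ff(2) unfolding P_def by force
  qed
  have admf: "adm f (g ` P)" unfolding adm_def using fP PX Dg(4) gP0 FfgP Ff(3) by auto
  define h where "h = compose XX f g"
  have hBij: "h \<in> Bij XX" unfolding h_def using compose_Bij Df(1) Dg(1) by blast
  have hinj: "inj_on h XX" using hBij unfolding Bij_def bij_betw_def by auto
  have hx: "h x = f (g x)" if "x \<in> XX" for x using that unfolding h_def compose_def by simp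
  have admh: "adm h P"
    unfolding adm_def
  proof (intro conjI ballI)
    fix x assume x: "x \<in> XX - P"
    have cg: "continuous (at x within XX) g" using Fg(3) x unfolding P_def by auto
    have gxX: "g x \<in> XX" using x Dg(4) by auto
    have "g x \<notin> Ff"
    proof
      assume "g x \<in> Ff" then have "gi (g x) \<in> P" unfolding P_def by auto
      then show False using gig x by auto
    qed
    then have cf: "continuous (at (g x) within g ` XX) f" using Ff(3) gxX Dg(4) by auto
    have "continuous (at x within XX) (f \<circ> g)" using continuous_within_compose[OF cg cf] .
    then show "continuous (at x within XX) h"
    proof (rule continuous_transform_within[of x XX _ 1])
      show "0 < (1::real)" "x \<in> XX" using x by auto
      fix x' assume "x' \<in> XX" then show "(f \<circ> g) x' = h x'" using hx by simp
    qed
  qed (use fP PX X0 in \<open>auto simp: P_def\<close>)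
  obtain M where gM: "good3 P M" using ex_good3[OF fP _ PX] unfolding P_def by auto
  define Q where "Q = P \<union> M"
  have qg: "goodQ g Q" unfolding goodQ_def Q_def using admg gM by blast
  have qh: "goodQ h Q" unfolding goodQ_def Q_def using admh gM by blast
  have qf: "goodQ f (g ` Q)" unfolding goodQ_def Q_def
    using admf good3_image[OF admg Dg(2) gP0 gM] by (metis image_Un)
  have QX: "finite Q" "Q \<subseteq> XX" using goodQ_fin[OF qg] by auto
  have e1: "eps h = odd (invs h Q)" using eps_eq[OF hinj qh] .
  have e2: "eps g = odd (invs g Q)" using eps_eq[OF Dg(3) qg] .
  have e3: "eps f = odd (invs f (g ` Q))" using eps_eq[OF Df(3) qf] .
  have "even (invs h Q) = (even (invs g Q) = even (invs f (g ` Q)))"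
    by (rule invs_comp[OF QX(1)]) (use QX Dg(3) hinj hx inj_on_subset in auto)
  then show ?thesis using e1 e2 e3 unfolding h_def by auto
qed


definition supp :: "(real \<Rightarrow> real) \<Rightarrow> real set" where
  "supp f = {x \<in> XX. f x \<noteq> x}"

lemma Sfin_PCH: "Sfin \<subseteq> PCH"
proof
  fix f assume f: "f \<in> Sfin"
  then have fin: "finite (supp f)" and B: "f \<in> Bij XX" unfolding Sfin_def supp_def by auto
  have "\<forall>x\<in>XX - supp f. continuous (at x within XX) f"
    using cont_id_off[OF fin] unfolding supp_def by auto
  then show "f \<in> PCH" unfolding PC_hat_carrier_def using B fin supp_def by blast
qed

lemma eps_idlike:
  assumes f: "f \<in> Bij XX" and id: "\<And>x. x \<in> XX \<Longrightarrow> f x = x"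
  shows "\<not> eps f"
proof -
  have X0: "(0::real) \<in> XX" by (simp add: XX_def)
  have adm: "adm f {0}" unfolding adm_def using X0 cont_id_off[of "{}" f] id by auto
  obtain M where M: "good3 {0} M" "goodQ f ({0} \<union> M)" using goodQ_ex[OF adm] by blast
  have inj: "inj_on f XX" using f unfolding Bij_def bij_betw_def by auto
  have QX: "{0} \<union> M \<subseteq> XX" using goodQ_fin[OF M(2)] by auto
  have "{(x,y). x \<in> {0} \<union> M \<and> y \<in> {0} \<union> M \<and> x < y \<and> f y < f x} = {}"
    using QX id by (force simp: subset_eq)
  then have "invs f ({0} \<union> M) = 0"
    unfolding invs_def by (metis card.empty)
  then show ?thesis using eps_eq[OF inj M(2)] by simp
qed

definition tau :: "real \<Rightarrow> real \<Rightarrow> real \<Rightarrow> real" where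
  "tau a b = restrict (Transposition.transpose a b) XX"

lemma tau_Bij:
  assumes "a \<in> XX" "b \<in> XX"
  shows "tau a b \<in> Bij XX"
proof -
  have "bij_betw (Transposition.transpose a b) XX XX" using permutes_imp_bij[OF permutes_swap_id[OF assms]] .
  then have "bij_betw (tau a b) XX XX" unfolding tau_def by (rule bij_betw_cong[THEN iffD1, rotated]) auto
  then show ?thesis unfolding Bij_def tau_def by auto
qed

lemma tau_Sfin:
  assumes "a \<in> XX" "b \<in> XX"
  shows "tau a b \<in> Sfin"
proof -
  have "{x \<in> XX. tau a b x \<noteq> x} \<subseteq> {a, b}" unfolding tau_def by (auto simp: Transposition.transpose_def)
  then have "finite {x \<in> XX. tau a b x \<noteq> x}" using finite_subset by blast
  then show ?thesis unfolding Sfin_def using tau_Bij[OF assms] by auto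
qed

lemma tau_comm: "tau a b = tau b a"
  unfolding tau_def by (simp add: transpose_commute)

lemma invs_tau:
  assumes ab: "a < b" and Q: "finite Q" "a \<in> Q" "b \<in> Q" "Q \<subseteq> XX"
  shows "invs (tau a b) Q = 1 + 2 * card {z \<in> Q. a < z \<and> z < b}"
proof -
  let ?Z = "{z \<in> Q. a < z \<and> z < b}"
  let ?S = "{(x,y). x \<in> Q \<and> y \<in> Q \<and> x < y \<and> tau a b y < tau a b x}"
  have t: "tau a b x = (if x = a then b else if x = b then a else x)" if "x \<in> XX" for x
    using that unfolding tau_def by (auto simp: Transposition.transpose_def)
  have "?S = insert (a,b) ((\<lambda>z. (a,z)) ` ?Z \<union> (\<lambda>z. (z,b)) ` ?Z)"
  proof
    show "?S \<subseteq> insert (a,b) ((\<lambda>z. (a,z)) ` ?Z \<union> (\<lambda>z. (z,b)) ` ?Z)"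
    proof
      fix p assume p: "p \<in> ?S"
      then obtain x y where xy: "p = (x,y)" "x \<in> Q" "y \<in> Q" "x < y" "tau a b y < tau a b x" by auto
      have xX: "x \<in> XX" "y \<in> XX" using xy Q by auto
      show "p \<in> insert (a,b) ((\<lambda>z. (a,z)) ` ?Z \<union> (\<lambda>z. (z,b)) ` ?Z)"
        using xy t[OF xX(1)] t[OF xX(2)] ab by (auto split: if_splits)
    qed
  next
    show "insert (a,b) ((\<lambda>z. (a,z)) ` ?Z \<union> (\<lambda>z. (z,b)) ` ?Z) \<subseteq> ?S"
    proof
      fix p assume p: "p \<in> insert (a,b) ((\<lambda>z. (a,z)) ` ?Z \<union> (\<lambda>z. (z,b)) ` ?Z)"
      have tab: "tau a b a = b" "tau a b b = a" using t Q ab by auto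
      have tz: "tau a b z = z" if "z \<in> ?Z" for z using that t Q by auto
      show "p \<in> ?S" using p tab tz Q ab by auto
    qed
  qed
  moreover have "card (insert (a,b) ((\<lambda>z. (a,z)) ` ?Z \<union> (\<lambda>z. (z,b)) ` ?Z)) = 1 + 2 * card ?Z"
  proof -
    have fZ: "finite ?Z" using Q by auto
    have c1: "card ((\<lambda>z. (a,z)) ` ?Z) = card ?Z" by (rule card_image) (auto simp: inj_on_def)
    have c2: "card ((\<lambda>z. (z,b)) ` ?Z) = card ?Z" by (rule card_image) (auto simp: inj_on_def)
    have d: "(\<lambda>z. (a,z)) ` ?Z \<inter> (\<lambda>z. (z,b)) ` ?Z = {}" by auto
    have "card ((\<lambda>z. (a,z)) ` ?Z \<union> (\<lambda>z. (z,b)) ` ?Z) = 2 * card ?Z"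
      using card_Un_disjoint[OF _ _ d] fZ c1 c2 by simp
    moreover have "(a,b) \<notin> (\<lambda>z. (a,z)) ` ?Z \<union> (\<lambda>z. (z,b)) ` ?Z" by auto
    ultimately show ?thesis using fZ by simp
  qed
  ultimately show ?thesis unfolding invs_def by simp
qed

lemma eps_tau:
  assumes "a \<in> XX" "b \<in> XX" "a \<noteq> b"
  shows "eps (tau a b)"
proof -
  have X0: "(0::real) \<in> XX" by (simp add: XX_def)
  have B: "tau a b \<in> Bij XX" using tau_Bij assms by auto
  have inj: "inj_on (tau a b) XX" using B unfolding Bij_def bij_betw_def by auto
  have adm: "adm (tau a b) {0, a, b}"
    unfolding adm_def using X0 assms cont_id_off[of "{a,b}" "tau a b"] by (auto simp: tau_def)
  obtain M where M: "good3 {0,a,b} M" "goodQ (tau a b) ({0,a,b} \<union> M)" using goodQ_ex[OF adm] by blast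
  have QX: "finite ({0,a,b} \<union> M)" "{0,a,b} \<union> M \<subseteq> XX" using goodQ_fin[OF M(2)] by auto
  have "odd (invs (tau a b) ({0,a,b} \<union> M))"
  proof (cases "a < b")
    case True
    then show ?thesis using invs_tau[OF True QX(1) _ _ QX(2)] by simp
  next
    case False
    then have "b < a" using assms by auto
    then show ?thesis using invs_tau[OF \<open>b < a\<close> QX(1) _ _ QX(2)] tau_comm by simp
  qed
  then show ?thesis using eps_eq[OF inj M(2)] by simp
qed


lemma eps_Sfin_aux:
  "\<forall>s. s \<in> Sfin \<longrightarrow> card (supp s) = n \<longrightarrow> eps s = (\<not> evenperm (restrict_id s XX))"
proof (induction n rule: less_induct)
  case (less n)
  show ?case
  proof (intro allI impI)
    fix s assume s: "s \<in> Sfin" "card (supp s) = n"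
    have B: "s \<in> Bij XX" and fin: "finite (supp s)" using s unfolding Sfin_def supp_def by auto
    have bs: "bij_betw s XX XX" "inj_on s XX" "s ` XX = XX" using B unfolding Bij_def bij_betw_def by auto
    have ext: "s \<in> extensional XX" using B unfolding Bij_def by auto
    show "eps s = (\<not> evenperm (restrict_id s XX))"
    proof (cases "supp s = {}")
      case True
      then have idd: "\<And>x. x \<in> XX \<Longrightarrow> s x = x" unfolding supp_def by auto
      have "restrict_id s XX = id" unfolding restrict_id_def using idd by auto
      then show ?thesis using eps_idlike[OF B idd] by simp
    next
      case False
      then obtain a where a: "a \<in> supp s" by auto
      define b where "b = s a"
      have aX: "a \<in> XX" "b \<in> XX" "a \<noteq> b" using a bs unfolding supp_def b_def by auto
      define t where "t = tau a b"
      define s' where "s' = compose XX t s"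
      have tB: "t \<in> Bij XX" unfolding t_def using tau_Bij aX by auto
      have tv: "t y = Transposition.transpose a b y" if "y \<in> XX" for y
        using that unfolding t_def tau_def by simp
      have s'B: "s' \<in> Bij XX" unfolding s'_def using compose_Bij tB B by blast
      have s'v: "s' x = t (s x)" if "x \<in> XX" for x using that unfolding s'_def compose_def by simp
      have sub: "supp s' \<subseteq> supp s - {a}"
      proof
        fix x assume x: "x \<in> supp s'"
        then have xX: "x \<in> XX" and ne: "s' x \<noteq> x" unfolding supp_def by auto
        have "x \<noteq> a" using ne s'v[OF aX(1)] tv aX unfolding b_def by auto
        moreover have "x \<in> supp s"
        proof (rule ccontr)
          assume "x \<notin> supp s"
          then have sx: "s x = x" using xX unfolding supp_def by auto
          have "x \<noteq> b"
          proof
            assume "x = b" then have "s a = s b" using sx unfolding b_def by simp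
            then show False using bs(2) aX by (auto simp: inj_on_def)
          qed
          then have "s' x = x" using s'v[OF xX] sx tv[OF xX] \<open>x \<noteq> a\<close> by simp
          then show False using ne by simp
        qed
        ultimately show "x \<in> supp s - {a}" by auto
      qed
      have fin': "finite (supp s')" using finite_subset[OF sub] fin by auto
      have s'S: "s' \<in> Sfin" using s'B fin' unfolding Sfin_def supp_def by auto
      have "card (supp s') \<le> card (supp s - {a})" using card_mono[OF _ sub] fin by auto
      also have "\<dots> < n"
      proof -
        have "card (supp s) > 0" using a fin by (auto simp: card_gt_0_iff)
        then show ?thesis using a fin s(2) by simp
      qed
      finally have lt: "card (supp s') < n" .
      have IH: "eps s' = (\<not> evenperm (restrict_id s' XX))" using less.IH[OF lt] s'S by blast
      have seq: "s = compose XX t s'"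
      proof
        fix x show "s x = compose XX t s' x"
        proof (cases "x \<in> XX")
          case True
          have sxX: "s x \<in> XX" using True bs by auto
          have "t (t (s x)) = s x" using tv sxX aX
            by (auto simp: Transposition.transpose_def)
          then show ?thesis using True s'v unfolding compose_def by simp
        next
          case False
          then show ?thesis using ext unfolding compose_def extensional_def by simp
        qed
      qed
      have tS: "t \<in> Sfin" unfolding t_def using tau_Sfin aX by auto
      have "eps s = (eps t \<noteq> eps s')"
        using eps_mult[of t s'] tS s'S Sfin_PCH seq by auto
      moreover have "eps t" unfolding t_def using eps_tau aX by auto
      ultimately have e1: "eps s = (\<not> eps s')" by simp
      have req: "restrict_id s XX = Transposition.transpose a b \<circ> restrict_id s' XX"
      proof
        fix x show "restrict_id s XX x = (Transposition.transpose a b \<circ> restrict_id s' XX) x"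
        proof (cases "x \<in> XX")
          case True
          have "s' x \<in> XX" using True s'B unfolding Bij_def bij_betw_def by auto
          then show ?thesis using True seq tv unfolding compose_def by simp
        next
          case False
          then have "x \<noteq> a" "x \<noteq> b" using aX by auto
          then show ?thesis using False by simp
        qed
      qed
      have perm: "permutation (restrict_id s' XX)"
        unfolding permutation
      proof
        have "bij_betw s' XX XX" using s'B unfolding Bij_def by auto
        then show "bij (restrict_id s' XX)" using bij_betw_restrict_id[of s' XX UNIV] by simp
        have "{x. restrict_id s' XX x \<noteq> x} = supp s'" unfolding supp_def restrict_id_def by auto
        then show "finite {x. restrict_id s' XX x \<noteq> x}" using fin' by simp
      qed
      have "evenperm (restrict_id s XX) = (evenperm (Transposition.transpose a b) = evenperm (restrict_id s' XX))"
        unfolding req by (rule evenperm_comp[OF permutation_swap_id perm])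
      then have "evenperm (restrict_id s XX) = (\<not> evenperm (restrict_id s' XX))"
        using evenperm_swap[of a b] aX by simp
      then show ?thesis using e1 IH by simp
    qed
  qed
qed

lemma eps_Sfin: "s \<in> Sfin \<Longrightarrow> eps s = (\<not> evenperm (restrict_id s XX))"
  using eps_Sfin_aux by blast

lemma Afin_iff: "s \<in> Afin \<longleftrightarrow> s \<in> Sfin \<and> \<not> eps s"
  unfolding Afin_def using eps_Sfin by auto

interpretation SXg: group SX by (rule group_BijGroup)

lemma carrier_SX: "carrier SX = Bij XX" by (simp add: BijGroup_def)

lemma mult_SX: "x \<in> Bij XX \<Longrightarrow> y \<in> Bij XX \<Longrightarrow> x \<otimes>\<^bsub>SX\<^esub> y = compose XX x y"
  by (simp add: BijGroup_def)

lemma one_SX: "\<one>\<^bsub>SX\<^esub> = (\<lambda>x\<in>XX. x)" by (simp add: BijGroup_def)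

lemma inv_SX: "x \<in> Bij XX \<Longrightarrow> inv\<^bsub>SX\<^esub> x = (\<lambda>y\<in>XX. inv_into XX x y)"
  by (rule inv_BijGroup)

lemma Bij_val: "x \<in> Bij XX \<Longrightarrow> z \<in> XX \<Longrightarrow> x z \<in> XX"
  unfolding Bij_def bij_betw_def by auto

lemma supp_fin_Sfin: "s \<in> Sfin \<longleftrightarrow> s \<in> Bij XX \<and> finite (supp s)"
  unfolding Sfin_def supp_def by auto

lemma Sfin_subgroup: "subgroup Sfin SX"
proof
  show "Sfin \<subseteq> carrier SX" unfolding Sfin_def carrier_SX by auto
next
  fix x y assume x: "x \<in> Sfin" and y: "y \<in> Sfin"
  have B: "x \<in> Bij XX" "y \<in> Bij XX" "finite (supp x)" "finite (supp y)" using x y supp_fin_Sfin by auto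
  have "supp (compose XX x y) \<subseteq> supp x \<union> supp y" unfolding supp_def compose_def by auto
  then have "finite (supp (compose XX x y))" using B finite_subset by blast
  then show "x \<otimes>\<^bsub>SX\<^esub> y \<in> Sfin" using B mult_SX compose_Bij supp_fin_Sfin by simp
next
  show "\<one>\<^bsub>SX\<^esub> \<in> Sfin" unfolding one_SX supp_fin_Sfin supp_def using id_Bij by auto
next
  fix x assume x: "x \<in> Sfin"
  have B: "x \<in> Bij XX" "finite (supp x)" using x supp_fin_Sfin by auto
  have inj: "inj_on x XX" using B unfolding Bij_def bij_betw_def by auto
  have "supp (\<lambda>y\<in>XX. inv_into XX x y) \<subseteq> supp x"
  proof
    fix z assume z: "z \<in> supp (\<lambda>y\<in>XX. inv_into XX x y)"
    then have zX: "z \<in> XX" and ne: "inv_into XX x z \<noteq> z" unfolding supp_def by auto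
    show "z \<in> supp x"
    proof (rule ccontr)
      assume "z \<notin> supp x"
      then have "x z = z" using zX unfolding supp_def by auto
      then have "inv_into XX x z = z" using inv_into_f_f[OF inj zX] by simp
      then show False using ne by simp
    qed
  qed
  then have "finite (supp (\<lambda>y\<in>XX. inv_into XX x y))" using B finite_subset by blast
  then show "inv\<^bsub>SX\<^esub> x \<in> Sfin" using B inv_SX restrict_inv_into_Bij supp_fin_Sfin by simp
qed

lemma Sfin_conj:
  assumes x: "x \<in> Bij XX" and s: "s \<in> Sfin"
  shows "x \<otimes>\<^bsub>SX\<^esub> s \<otimes>\<^bsub>SX\<^esub> inv\<^bsub>SX\<^esub> x \<in> Sfin"
proof -
  have B: "s \<in> Bij XX" "finite (supp s)" using s supp_fin_Sfin by auto
  have xi: "inv\<^bsub>SX\<^esub> x \<in> Bij XX" using SXg.inv_closed x carrier_SX by simp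
  have xs: "x \<otimes>\<^bsub>SX\<^esub> s \<in> Bij XX" using SXg.m_closed x B carrier_SX by simp
  have prod: "x \<otimes>\<^bsub>SX\<^esub> s \<otimes>\<^bsub>SX\<^esub> inv\<^bsub>SX\<^esub> x \<in> Bij XX" using SXg.m_closed xs xi carrier_SX by simp
  have xX: "x ` XX = XX" using x unfolding Bij_def bij_betw_def by auto
  have val: "(x \<otimes>\<^bsub>SX\<^esub> s \<otimes>\<^bsub>SX\<^esub> inv\<^bsub>SX\<^esub> x) z = x (s (inv_into XX x z))" if z: "z \<in> XX" for z
  proof -
    have "inv_into XX x z \<in> XX" using z xX by (metis inv_into_into)
    then show ?thesis using z mult_SX[OF xs xi] mult_SX[OF x B(1)] inv_SX[OF x] unfolding compose_def by simp
  qed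
  have "supp (x \<otimes>\<^bsub>SX\<^esub> s \<otimes>\<^bsub>SX\<^esub> inv\<^bsub>SX\<^esub> x) \<subseteq> x ` supp s"
  proof
    fix z assume z: "z \<in> supp (x \<otimes>\<^bsub>SX\<^esub> s \<otimes>\<^bsub>SX\<^esub> inv\<^bsub>SX\<^esub> x)"
    then have zX: "z \<in> XX" and ne: "x (s (inv_into XX x z)) \<noteq> z" unfolding supp_def using val by auto
    have iz: "inv_into XX x z \<in> XX" "x (inv_into XX x z) = z" using zX xX by (metis inv_into_into, metis f_inv_into_f)
    have "inv_into XX x z \<in> supp s"
    proof (rule ccontr)
      assume "inv_into XX x z \<notin> supp s"
      then have "s (inv_into XX x z) = inv_into XX x z" using iz unfolding supp_def by auto
      then show False using ne iz by simp
    qed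
    then show "z \<in> x ` supp s" using iz by (metis image_eqI)
  qed
  then have "finite (supp (x \<otimes>\<^bsub>SX\<^esub> s \<otimes>\<^bsub>SX\<^esub> inv\<^bsub>SX\<^esub> x))" using B finite_subset by blast
  then show ?thesis using prod supp_fin_Sfin by simp
qed


lemma PCH_compose:
  assumes f: "f \<in> PCH" and g: "g \<in> PCH"
  shows "compose XX f g \<in> PCH"
proof -
  note Df = PCH_D[OF f] and Dg = PCH_D[OF g]
  obtain Ff where Ff: "finite Ff" "Ff \<subseteq> XX" "\<forall>x\<in>XX - Ff. continuous (at x within XX) f" using Df(5) by blast
  obtain Fg where Fg: "finite Fg" "Fg \<subseteq> XX" "\<forall>x\<in>XX - Fg. continuous (at x within XX) g" using Dg(5) by blast
  define gi where "gi = inv_into XX g"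
  have giX: "gi y \<in> XX" if "y \<in> XX" for y using that Dg(4) unfolding gi_def by (metis inv_into_into)
  have gig: "gi (g x) = x" if "x \<in> XX" for x using that Dg(3) unfolding gi_def by (metis inv_into_f_f)
  define F where "F = Fg \<union> gi ` Ff"
  have FX: "F \<subseteq> XX" "finite F" unfolding F_def using giX Fg Ff by auto
  define h where "h = compose XX f g"
  have hBij: "h \<in> Bij XX" unfolding h_def using compose_Bij Df(1) Dg(1) by blast
  have hx: "h x = f (g x)" if "x \<in> XX" for x using that unfolding h_def compose_def by simp
  have "\<forall>x\<in>XX - F. continuous (at x within XX) h"
  proof
    fix x assume x: "x \<in> XX - F"
    have cg: "continuous (at x within XX) g" using Fg(3) x unfolding F_def by auto
    have gxX: "g x \<in> XX" using x Dg(4) by auto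
    have "g x \<notin> Ff"
    proof
      assume "g x \<in> Ff" then have "gi (g x) \<in> F" unfolding F_def by auto
      then show False using gig x by auto
    qed
    then have cf: "continuous (at (g x) within g ` XX) f" using Ff(3) gxX Dg(4) by auto
    have "continuous (at x within XX) (f \<circ> g)" using continuous_within_compose[OF cg cf] .
    then show "continuous (at x within XX) h"
    proof (rule continuous_transform_within[of x XX _ 1])
      show "0 < (1::real)" "x \<in> XX" using x by auto
      fix x' assume "x' \<in> XX" then show "(f \<circ> g) x' = h x'" using hx by simp
    qed
  qed
  then show ?thesis unfolding PC_hat_carrier_def h_def using hBij FX h_def by blast
qed

lemma eps_mult_SX:
  assumes "x \<in> PCH" "y \<in> PCH"
  shows "eps (x \<otimes>\<^bsub>SX\<^esub> y) = (eps x \<noteq> eps y)" "x \<otimes>\<^bsub>SX\<^esub> y \<in> PCH"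
  using eps_mult[OF assms] PCH_compose[OF assms] mult_SX PCH_D(1) assms by auto

lemma carrier_PC: "carrier PC = {Sfin #>\<^bsub>SX\<^esub> a | a. a \<in> PCH}"
  unfolding PC_def FactGroup_def RCOSETS_def PC_hat_def r_coset_def by auto

lemma mult_PCG: "g1 \<otimes>\<^bsub>PC\<lparr>carrier := G\<rparr>\<^esub> g2 = g1 <#>\<^bsub>SX\<^esub> g2"
  unfolding PC_def FactGroup_def PC_hat_def set_mult_def by simp

lemma carrier_kap: "carrier (kap_ext G) = {Afin #>\<^bsub>SX\<^esub> a | a. a \<in> \<Union>G}"
  unfolding kap_ext_def FactGroup_def RCOSETS_def r_coset_def G_hat_def by auto

lemma mult_kap: "A \<otimes>\<^bsub>kap_ext G\<^esub> B = A <#>\<^bsub>SX\<^esub> B"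
  unfolding kap_ext_def FactGroup_def set_mult_def by simp

lemma coset_mem: "x \<in> H #>\<^bsub>SX\<^esub> h0 \<longleftrightarrow> (\<exists>s\<in>H. x = s \<otimes>\<^bsub>SX\<^esub> h0)"
  unfolding r_coset_def by auto

lemma Sfin_Bij: "s \<in> Sfin \<Longrightarrow> s \<in> Bij XX" unfolding Sfin_def by auto

lemma coset_PCH: "h0 \<in> PCH \<Longrightarrow> Sfin #>\<^bsub>SX\<^esub> h0 \<subseteq> PCH"
proof
  fix x assume h0: "h0 \<in> PCH" and "x \<in> Sfin #>\<^bsub>SX\<^esub> h0"
  then obtain s where s: "s \<in> Sfin" "x = s \<otimes>\<^bsub>SX\<^esub> h0" unfolding coset_mem by blast
  have "s \<in> PCH" using s(1) Sfin_PCH by blast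
  then show "x \<in> PCH" using eps_mult_SX(2)[OF _ h0] s(2) by simp
qed

lemma coset_left:
  assumes h0: "h0 \<in> PCH" and s: "s \<in> Sfin" and x: "x \<in> Sfin #>\<^bsub>SX\<^esub> h0"
  shows "s \<otimes>\<^bsub>SX\<^esub> x \<in> Sfin #>\<^bsub>SX\<^esub> h0"
proof -
  obtain s' where s': "s' \<in> Sfin" "x = s' \<otimes>\<^bsub>SX\<^esub> h0" using x coset_mem by blast
  have c: "s \<in> carrier SX" "s' \<in> carrier SX" "h0 \<in> carrier SX"
    using s s' h0 Sfin_Bij PCH_D(1) carrier_SX by auto
  have "s \<otimes>\<^bsub>SX\<^esub> x = (s \<otimes>\<^bsub>SX\<^esub> s') \<otimes>\<^bsub>SX\<^esub> h0" using s' c SXg.m_assoc by simp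
  moreover have "s \<otimes>\<^bsub>SX\<^esub> s' \<in> Sfin" using subgroup.m_closed[OF Sfin_subgroup] s s'(1) by blast
  ultimately show ?thesis using coset_mem by blast
qed

lemma coset_repr:
  assumes h0: "h0 \<in> PCH" and h: "h \<in> Sfin #>\<^bsub>SX\<^esub> h0"
  shows "Sfin #>\<^bsub>SX\<^esub> h0 = Sfin #>\<^bsub>SX\<^esub> h"
  using SXg.repr_independence[OF h _ Sfin_subgroup] h0 PCH_D(1) carrier_SX by simp

lemma tau0: "tau 0 (1/2) \<in> Sfin" "eps (tau 0 (1/2))"
proof -
  have a: "(0::real) \<in> XX" "(1/2::real) \<in> XX" "(0::real) \<noteq> 1/2" by (auto simp: XX_def)
  show "tau 0 (1/2) \<in> Sfin" by (rule tau_Sfin[OF a(1,2)])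
  show "eps (tau 0 (1/2))" by (rule eps_tau[OF a])
qed

lemma exh:
  assumes h0: "h0 \<in> PCH"
  shows "\<exists>h \<in> Sfin #>\<^bsub>SX\<^esub> h0. \<not> eps h"
proof (cases "eps h0")
  case False
  have c: "h0 \<in> carrier SX" using h0 PCH_D(1) carrier_SX by simp
  have "\<one>\<^bsub>SX\<^esub> \<otimes>\<^bsub>SX\<^esub> h0 = h0" using SXg.l_one[OF c] .
  then have "h0 \<in> Sfin #>\<^bsub>SX\<^esub> h0"
    using subgroup.one_closed[OF Sfin_subgroup] unfolding coset_mem by metis
  then show ?thesis using False by blast
next
  case True
  let ?t = "tau 0 (1/2)"
  have "?t \<otimes>\<^bsub>SX\<^esub> h0 \<in> Sfin #>\<^bsub>SX\<^esub> h0" using coset_mem tau0 by blast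
  moreover have "\<not> eps (?t \<otimes>\<^bsub>SX\<^esub> h0)" using eps_mult_SX[OF _ h0] tau0 Sfin_PCH True by auto
  ultimately show ?thesis by blast
qed

lemma sg:
  assumes h0: "h0 \<in> PCH" and h: "h \<in> Sfin #>\<^bsub>SX\<^esub> h0" and ne: "\<not> eps h"
  shows "{x \<in> Sfin #>\<^bsub>SX\<^esub> h0. \<not> eps x} = Afin #>\<^bsub>SX\<^esub> h"
proof -
  have hP: "h \<in> PCH" using coset_PCH[OF h0] h by blast
  have eq: "Sfin #>\<^bsub>SX\<^esub> h0 = Sfin #>\<^bsub>SX\<^esub> h" using coset_repr[OF h0 h] .
  show ?thesis
  proof
    show "{x \<in> Sfin #>\<^bsub>SX\<^esub> h0. \<not> eps x} \<subseteq> Afin #>\<^bsub>SX\<^esub> h"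
    proof
      fix x assume x: "x \<in> {x \<in> Sfin #>\<^bsub>SX\<^esub> h0. \<not> eps x}"
      then have "x \<in> Sfin #>\<^bsub>SX\<^esub> h" using eq by simp
      then obtain s where s: "s \<in> Sfin" "x = s \<otimes>\<^bsub>SX\<^esub> h" unfolding coset_mem by blast
      have "eps x = (eps s \<noteq> eps h)" using eps_mult_SX(1)[OF _ hP] s Sfin_PCH by auto
      then have "\<not> eps s" using x ne by auto
      then have "s \<in> Afin" using Afin_iff s by auto
      then show "x \<in> Afin #>\<^bsub>SX\<^esub> h" using s coset_mem by blast
    qed
  next
    show "Afin #>\<^bsub>SX\<^esub> h \<subseteq> {x \<in> Sfin #>\<^bsub>SX\<^esub> h0. \<not> eps x}"
    proof
      fix x assume "x \<in> Afin #>\<^bsub>SX\<^esub> h"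
      then obtain s where s: "s \<in> Afin" "x = s \<otimes>\<^bsub>SX\<^esub> h" using coset_mem by blast
      have sS: "s \<in> Sfin" "\<not> eps s" using s Afin_iff by auto
      have "eps x = (eps s \<noteq> eps h)" using eps_mult_SX(1)[OF _ hP] s sS Sfin_PCH by auto
      then have "\<not> eps x" using sS ne by simp
      moreover have "x \<in> Sfin #>\<^bsub>SX\<^esub> h0" using eq sS s coset_mem by blast
      ultimately show "x \<in> {x \<in> Sfin #>\<^bsub>SX\<^esub> h0. \<not> eps x}" by simp
    qed
  qed
qed

context group begin
lemma cancel1: "x \<in> carrier G \<Longrightarrow> w \<in> carrier G \<Longrightarrow> x \<otimes> (inv x \<otimes> w) = w"
  by (simp add: m_assoc[symmetric])
lemma cancel2: "x \<in> carrier G \<Longrightarrow> w \<in> carrier G \<Longrightarrow> inv x \<otimes> (x \<otimes> w) = w"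
  by (simp add: m_assoc[symmetric])

lemma id1:
  assumes "t \<in> carrier G" "x \<in> carrier G" "y \<in> carrier G"
  shows "(t \<otimes> x) \<otimes> ((inv x \<otimes> inv t \<otimes> x) \<otimes> y) = x \<otimes> y"
  using assms by (simp add: m_assoc cancel1)

lemma id2:
  assumes "a \<in> carrier G" "h \<in> carrier G" "s \<in> carrier G"
  shows "(a \<otimes> h) \<otimes> s = (a \<otimes> (h \<otimes> s \<otimes> inv h)) \<otimes> h"
  using assms by (simp add: m_assoc)

lemma id3:
  assumes "h \<in> carrier G" "s \<in> carrier G"
  shows "s \<otimes> h = (\<one> \<otimes> h) \<otimes> (inv h \<otimes> s \<otimes> inv (inv h))"
  using assms by (simp add: m_assoc cancel1)
end

lemma one_Afin: "\<one>\<^bsub>SX\<^esub> \<in> Afin"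
proof -
  have "\<one>\<^bsub>SX\<^esub> \<in> Sfin" using subgroup.one_closed[OF Sfin_subgroup] .
  moreover have "\<not> eps \<one>\<^bsub>SX\<^esub>" unfolding one_SX by (rule eps_idlike) (auto intro: id_Bij)
  ultimately show ?thesis using Afin_iff by auto
qed

lemma Afin_Sfin: "Afin \<subseteq> Sfin" using Afin_iff by auto

lemma mult_PC: "g1 \<otimes>\<^bsub>PC\<^esub> g2 = g1 <#>\<^bsub>SX\<^esub> g2"
  unfolding PC_def FactGroup_def PC_hat_def set_mult_def by simp

lemma in_SX: "x \<in> PCH \<Longrightarrow> x \<in> carrier SX" using PCH_D(1) carrier_SX by simp

lemma Sfin_SX: "x \<in> Sfin \<Longrightarrow> x \<in> carrier SX" using Sfin_Bij carrier_SX by simp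

theorem corollary1p2:
  assumes "subgroup G PC"
  shows "kapoudjian_class_zero G"
proof -
  define sf where "sf g = {x \<in> g. \<not> eps x}" for g
  have Gc: "\<exists>h0\<in>PCH. g = Sfin #>\<^bsub>SX\<^esub> h0" if "g \<in> G" for g
    using subgroup.subset[OF assms] that carrier_PC by auto
  have key: "\<exists>h\<in>g. \<not> eps h \<and> h \<in> PCH \<and> sf g = Afin #>\<^bsub>SX\<^esub> h \<and> g = Sfin #>\<^bsub>SX\<^esub> h \<and> g \<subseteq> PCH"
    if gG: "g \<in> G" for g
  proof -
    obtain h0 where h0: "h0 \<in> PCH" "g = Sfin #>\<^bsub>SX\<^esub> h0" using Gc[OF gG] by blast
    obtain h where h: "h \<in> Sfin #>\<^bsub>SX\<^esub> h0" "\<not> eps h" using exh[OF h0(1)] by blast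
    have "h \<in> PCH" using coset_PCH[OF h0(1)] h by blast
    moreover have "sf g = Afin #>\<^bsub>SX\<^esub> h" unfolding sf_def h0(2) using sg[OF h0(1) h] .
    moreover have "g = Sfin #>\<^bsub>SX\<^esub> h" using coset_repr[OF h0(1) h(1)] h0(2) by simp
    moreover have "g \<subseteq> PCH" using coset_PCH[OF h0(1)] h0(2) by simp
    ultimately show ?thesis using h h0 by blast
  qed
  have mulG: "g1 <#>\<^bsub>SX\<^esub> g2 \<in> G" if "g1 \<in> G" "g2 \<in> G" for g1 g2
    using subgroup.m_closed[OF assms that] mult_PC by simp
  have hom: "sf \<in> hom (PC\<lparr>carrier := G\<rparr>) (kap_ext G)"
  proof (rule homI)
    fix g assume "g \<in> carrier (PC\<lparr>carrier := G\<rparr>)"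
    then have g: "g \<in> G" by simp
    obtain h where h: "h \<in> g" "sf g = Afin #>\<^bsub>SX\<^esub> h" using key[OF g] by blast
    then show "sf g \<in> carrier (kap_ext G)" unfolding carrier_kap using g by blast
  next
    fix g1 g2 assume "g1 \<in> carrier (PC\<lparr>carrier := G\<rparr>)" "g2 \<in> carrier (PC\<lparr>carrier := G\<rparr>)"
    then have g: "g1 \<in> G" "g2 \<in> G" by auto
    obtain h1 where h1: "h1 \<in> PCH" "g1 = Sfin #>\<^bsub>SX\<^esub> h1" "g1 \<subseteq> PCH" using key[OF g(1)] by blast
    obtain h2 where h2: "h2 \<in> PCH" "g2 = Sfin #>\<^bsub>SX\<^esub> h2" "g2 \<subseteq> PCH" using key[OF g(2)] by blast
    have "sf (g1 <#>\<^bsub>SX\<^esub> g2) = sf g1 <#>\<^bsub>SX\<^esub> sf g2"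
    proof
      show "sf g1 <#>\<^bsub>SX\<^esub> sf g2 \<subseteq> sf (g1 <#>\<^bsub>SX\<^esub> g2)"
      proof
        fix z assume "z \<in> sf g1 <#>\<^bsub>SX\<^esub> sf g2"
        then obtain x y where xy: "x \<in> sf g1" "y \<in> sf g2" "z = x \<otimes>\<^bsub>SX\<^esub> y" unfolding set_mult_def by auto
        have xP: "x \<in> PCH" "y \<in> PCH" "\<not> eps x" "\<not> eps y" using xy h1 h2 unfolding sf_def by auto
        have "\<not> eps z" using eps_mult_SX(1)[OF xP(1,2)] xP xy by simp
        moreover have "z \<in> g1 <#>\<^bsub>SX\<^esub> g2" using xy unfolding sf_def set_mult_def by auto
        ultimately show "z \<in> sf (g1 <#>\<^bsub>SX\<^esub> g2)" unfolding sf_def by simp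
      qed
    next
      show "sf (g1 <#>\<^bsub>SX\<^esub> g2) \<subseteq> sf g1 <#>\<^bsub>SX\<^esub> sf g2"
      proof
        fix z assume z: "z \<in> sf (g1 <#>\<^bsub>SX\<^esub> g2)"
        then obtain x y where xy: "x \<in> g1" "y \<in> g2" "z = x \<otimes>\<^bsub>SX\<^esub> y" "\<not> eps z"
          unfolding sf_def set_mult_def by auto
        have xP: "x \<in> PCH" "y \<in> PCH" using xy h1 h2 by auto
        have ez: "eps z = (eps x \<noteq> eps y)" using eps_mult_SX(1)[OF xP] xy by simp
        show "z \<in> sf g1 <#>\<^bsub>SX\<^esub> sf g2"
        proof (cases "eps x")
          case False
          then have "x \<in> sf g1" "y \<in> sf g2" using xy ez unfolding sf_def by auto
          then show ?thesis using xy unfolding set_mult_def by auto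
        next
          case True
          define t where "t = tau 0 (1/2)"
          have t: "t \<in> Sfin" "eps t" using tau0 unfolding t_def by auto
          have tc: "t \<in> carrier SX" "inv\<^bsub>SX\<^esub> t \<in> Sfin"
            using Sfin_SX t subgroup.m_inv_closed[OF Sfin_subgroup] by auto
          have xc: "x \<in> carrier SX" "y \<in> carrier SX" "inv\<^bsub>SX\<^esub> x \<in> carrier SX" using in_SX xP by auto
          define x' where "x' = t \<otimes>\<^bsub>SX\<^esub> x"
          define c where "c = inv\<^bsub>SX\<^esub> x \<otimes>\<^bsub>SX\<^esub> inv\<^bsub>SX\<^esub> t \<otimes>\<^bsub>SX\<^esub> x"
          define y' where "y' = c \<otimes>\<^bsub>SX\<^esub> y"
          have cS: "c \<in> Sfin"
            using Sfin_conj[of "inv\<^bsub>SX\<^esub> x" "inv\<^bsub>SX\<^esub> t"] tc xc carrier_SX unfolding c_def by simp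
          have x'g: "x' \<in> g1" using coset_left[OF h1(1) t(1)] xy h1(2) unfolding x'_def by simp
          have y'g: "y' \<in> g2" using coset_left[OF h2(1) cS] xy h2(2) unfolding y'_def by simp
          have x'P: "x' \<in> PCH" "y' \<in> PCH" using x'g y'g h1 h2 by auto
          have "x' \<otimes>\<^bsub>SX\<^esub> y' = x \<otimes>\<^bsub>SX\<^esub> y"
            unfolding x'_def y'_def c_def using SXg.id1[OF tc(1) xc(1) xc(2)] by simp
          then have e1: "eps z = (eps x' \<noteq> eps y')" using eps_mult_SX(1)[OF x'P] xy by simp
          have e2: "\<not> eps x'" using eps_mult_SX(1)[of t x] t xP Sfin_PCH True unfolding x'_def by auto
          have "\<not> eps y'" using e1 e2 xy by simp
          then have "x' \<in> sf g1" "y' \<in> sf g2" using x'g y'g e2 unfolding sf_def by auto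
          moreover have "z = x' \<otimes>\<^bsub>SX\<^esub> y'" using \<open>x' \<otimes>\<^bsub>SX\<^esub> y' = x \<otimes>\<^bsub>SX\<^esub> y\<close> xy by simp
          ultimately show ?thesis unfolding set_mult_def by auto
        qed
      qed
    qed
    then show "sf (g1 \<otimes>\<^bsub>PC\<lparr>carrier := G\<rparr>\<^esub> g2) = sf g1 \<otimes>\<^bsub>kap_ext G\<^esub> sf g2"
      unfolding mult_PCG mult_kap .
  qed
  have proj: "kap_proj (sf g) = g" if g: "g \<in> G" for g
  proof -
    obtain h where h: "h \<in> PCH" "sf g = Afin #>\<^bsub>SX\<^esub> h" "g = Sfin #>\<^bsub>SX\<^esub> h" using key[OF g] by blast
    have hc: "h \<in> carrier SX" "inv\<^bsub>SX\<^esub> h \<in> carrier SX" using in_SX h by auto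
    show ?thesis
      unfolding kap_proj_def
    proof
      show "sf g <#>\<^bsub>SX\<^esub> Sfin \<subseteq> g"
      proof
        fix w assume "w \<in> sf g <#>\<^bsub>SX\<^esub> Sfin"
        then obtain x s where xs: "x \<in> sf g" "s \<in> Sfin" "w = x \<otimes>\<^bsub>SX\<^esub> s" unfolding set_mult_def by auto
        obtain a where a: "a \<in> Afin" "x = a \<otimes>\<^bsub>SX\<^esub> h" using xs h(2) coset_mem by blast
        have aS: "a \<in> Sfin" "a \<in> carrier SX" using a Afin_Sfin Sfin_SX by auto
        have c: "h \<otimes>\<^bsub>SX\<^esub> s \<otimes>\<^bsub>SX\<^esub> inv\<^bsub>SX\<^esub> h \<in> Sfin" using Sfin_conj[of h s] h xs carrier_SX hc by simp
        have w: "w = (a \<otimes>\<^bsub>SX\<^esub> (h \<otimes>\<^bsub>SX\<^esub> s \<otimes>\<^bsub>SX\<^esub> inv\<^bsub>SX\<^esub> h)) \<otimes>\<^bsub>SX\<^esub> h"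
          using SXg.id2[OF aS(2) hc(1) Sfin_SX[OF xs(2)]] xs a by simp
        have "a \<otimes>\<^bsub>SX\<^esub> (h \<otimes>\<^bsub>SX\<^esub> s \<otimes>\<^bsub>SX\<^esub> inv\<^bsub>SX\<^esub> h) \<in> Sfin"
          using subgroup.m_closed[OF Sfin_subgroup aS(1) c] .
        then show "w \<in> g" using w h(3) coset_mem by blast
      qed
    next
      show "g \<subseteq> sf g <#>\<^bsub>SX\<^esub> Sfin"
      proof
        fix w assume "w \<in> g"
        then obtain s where s: "s \<in> Sfin" "w = s \<otimes>\<^bsub>SX\<^esub> h" using h(3) coset_mem by blast
        have w: "w = (\<one>\<^bsub>SX\<^esub> \<otimes>\<^bsub>SX\<^esub> h) \<otimes>\<^bsub>SX\<^esub> (inv\<^bsub>SX\<^esub> h \<otimes>\<^bsub>SX\<^esub> s \<otimes>\<^bsub>SX\<^esub> inv\<^bsub>SX\<^esub> (inv\<^bsub>SX\<^esub> h))"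
          using SXg.id3[OF hc(1) Sfin_SX[OF s(1)]] s by simp
        have c: "inv\<^bsub>SX\<^esub> h \<otimes>\<^bsub>SX\<^esub> s \<otimes>\<^bsub>SX\<^esub> inv\<^bsub>SX\<^esub> (inv\<^bsub>SX\<^esub> h) \<in> Sfin"
          using Sfin_conj[of "inv\<^bsub>SX\<^esub> h" s] hc s carrier_SX by simp
        have "\<one>\<^bsub>SX\<^esub> \<otimes>\<^bsub>SX\<^esub> h \<in> sf g" using h(2) one_Afin coset_mem by blast
        then show "w \<in> sf g <#>\<^bsub>SX\<^esub> Sfin" using w c unfolding set_mult_def by blast
      qed
    qed
  qed
  show ?thesis unfolding kapoudjian_class_zero_def using hom proj by blast
qed

end
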